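(* Let $\mathcal{C}$ be a skeletally small triangulated category and $\mathcal{D}$ a radical dense subcategory of $\mathcal{C}$. If $U\in\mathcal{C}$ and $[U]$ is a torsion element of $G(\mathcal{C})$, then $U\in\mathcal{D}$.
   Context: $G(\mathcal{C})$ is the Grothendieck group of $\mathcal{C}$ (free abelian group on isomorphism classes modulo $[V]=[U]+[W]$ for exact triangles $U\to V\to W\to U[1]$). A dense subcategory is a triangulated subcategory $\mathcal{D}$ (full, closed under $[\pm1]$, isomorphisms and cones) such that for every $U\in\mathcal{C}$ there is $V$ with $U\oplus V\in\mathcal{D}$; it is radical if $U^n\in\mathcal{D}$ for some $n\ge1$ implies $U\in\mathcal{D}$. *)

theory Defs
  imports Main
begin

text \<open>A (pre)triangulated category given by explicit data: objects of type 'o,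
morphisms of type 'm (each with a domain and codomain), composition (comp g f = g after f),
identities, the abelian group structure on Hom-sets, the suspension functor [1] on objects
and morphisms, and the class of exact (distinguished) triangles
(X, Y, Z, f, g, h) meaning X -f-> Y -g-> Z -h-> X[1].\<close>

record ('o, 'm) tricat =
  Ob :: "'o set"
  Mor :: "'m set"
  dom :: "'m \<Rightarrow> 'o"
  cod :: "'m \<Rightarrow> 'o"
  comp :: "'m \<Rightarrow> 'm \<Rightarrow> 'm"
  ident :: "'o \<Rightarrow> 'm"
  madd :: "'m \<Rightarrow> 'm \<Rightarrow> 'm"
  mzero :: "'o \<Rightarrow> 'o \<Rightarrow> 'm"
  mneg :: "'m \<Rightarrow> 'm"
  shO :: "'o \<Rightarrow> 'o"
  shM :: "'m \<Rightarrow> 'm"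
  Tri :: "('o \<times> 'o \<times> 'o \<times> 'm \<times> 'm \<times> 'm) set"

definition hom :: "('o, 'm, 'x) tricat_scheme \<Rightarrow> 'o \<Rightarrow> 'o \<Rightarrow> 'm set" where
  "hom C X Y = {f \<in> Mor C. dom C f = X \<and> cod C f = Y}"

definition is_category :: "('o, 'm, 'x) tricat_scheme \<Rightarrow> bool" where
  "is_category C \<longleftrightarrow>
     (\<forall>f \<in> Mor C. dom C f \<in> Ob C \<and> cod C f \<in> Ob C) \<and>
     (\<forall>X \<in> Ob C. ident C X \<in> hom C X X) \<and>
     (\<forall>X \<in> Ob C. \<forall>Y \<in> Ob C. \<forall>Z \<in> Ob C. \<forall>f \<in> hom C X Y. \<forall>g \<in> hom C Y Z.
        comp C g f \<in> hom C X Z) \<and>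
     (\<forall>X \<in> Ob C. \<forall>Y \<in> Ob C. \<forall>f \<in> hom C X Y.
        comp C f (ident C X) = f \<and> comp C (ident C Y) f = f) \<and>
     (\<forall>W \<in> Ob C. \<forall>X \<in> Ob C. \<forall>Y \<in> Ob C. \<forall>Z \<in> Ob C.
        \<forall>f \<in> hom C W X. \<forall>g \<in> hom C X Y. \<forall>h \<in> hom C Y Z.
        comp C h (comp C g f) = comp C (comp C h g) f)"

definition is_preadditive :: "('o, 'm, 'x) tricat_scheme \<Rightarrow> bool" where
  "is_preadditive C \<longleftrightarrow> is_category C \<and>
     (\<forall>X \<in> Ob C. \<forall>Y \<in> Ob C.
        mzero C X Y \<in> hom C X Y \<and>
        (\<forall>f \<in> hom C X Y. \<forall>g \<in> hom C X Y. madd C f g \<in> hom C X Y \<and> madd C f g = madd C g f) \<and>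
        (\<forall>f \<in> hom C X Y. \<forall>g \<in> hom C X Y. \<forall>h \<in> hom C X Y.
            madd C (madd C f g) h = madd C f (madd C g h)) \<and>
        (\<forall>f \<in> hom C X Y. madd C f (mzero C X Y) = f \<and>
            mneg C f \<in> hom C X Y \<and> madd C f (mneg C f) = mzero C X Y)) \<and>
     (\<forall>X \<in> Ob C. \<forall>Y \<in> Ob C. \<forall>Z \<in> Ob C.
        (\<forall>f \<in> hom C X Y. \<forall>g \<in> hom C Y Z. \<forall>g' \<in> hom C Y Z.
            comp C (madd C g g') f = madd C (comp C g f) (comp C g' f)) \<and>
        (\<forall>f \<in> hom C X Y. \<forall>f' \<in> hom C X Y. \<forall>g \<in> hom C Y Z.
            comp C g (madd C f f') = madd C (comp C g f) (comp C g f')))"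

definition is_zero_obj :: "('o, 'm, 'x) tricat_scheme \<Rightarrow> 'o \<Rightarrow> bool" where
  "is_zero_obj C Z \<longleftrightarrow> Z \<in> Ob C \<and>
     (\<forall>X \<in> Ob C. hom C Z X = {mzero C Z X} \<and> hom C X Z = {mzero C X Z})"

definition is_biproduct :: "('o, 'm, 'x) tricat_scheme \<Rightarrow> 'o \<Rightarrow> 'o \<Rightarrow> 'o \<Rightarrow> bool" where
  "is_biproduct C S X Y \<longleftrightarrow> S \<in> Ob C \<and> X \<in> Ob C \<and> Y \<in> Ob C \<and>
     (\<exists>i1 i2 p1 p2. i1 \<in> hom C X S \<and> i2 \<in> hom C Y S \<and> p1 \<in> hom C S X \<and> p2 \<in> hom C S Y \<and>
        comp C p1 i1 = ident C X \<and> comp C p2 i2 = ident C Y \<and>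
        comp C p2 i1 = mzero C X Y \<and> comp C p1 i2 = mzero C Y X \<and>
        madd C (comp C i1 p1) (comp C i2 p2) = ident C S)"

definition is_additive :: "('o, 'm, 'x) tricat_scheme \<Rightarrow> bool" where
  "is_additive C \<longleftrightarrow> is_preadditive C \<and> (\<exists>Z. is_zero_obj C Z) \<and>
     (\<forall>X \<in> Ob C. \<forall>Y \<in> Ob C. \<exists>S. is_biproduct C S X Y)"

definition is_iso :: "('o, 'm, 'x) tricat_scheme \<Rightarrow> 'm \<Rightarrow> bool" where
  "is_iso C f \<longleftrightarrow> f \<in> Mor C \<and>
     (\<exists>g \<in> hom C (cod C f) (dom C f).
        comp C g f = ident C (dom C f) \<and> comp C f g = ident C (cod C f))"

definition isomorphic :: "('o, 'm, 'x) tricat_scheme \<Rightarrow> 'o \<Rightarrow> 'o \<Rightarrow> bool" where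
  "isomorphic C X Y \<longleftrightarrow> (\<exists>f \<in> hom C X Y. is_iso C f)"

definition shift_autoequivalence :: "('o, 'm, 'x) tricat_scheme \<Rightarrow> bool" where
  "shift_autoequivalence C \<longleftrightarrow>
     (\<forall>X \<in> Ob C. shO C X \<in> Ob C \<and> shM C (ident C X) = ident C (shO C X)) \<and>
     (\<forall>X \<in> Ob C. \<forall>Y \<in> Ob C. \<forall>f \<in> hom C X Y. shM C f \<in> hom C (shO C X) (shO C Y)) \<and>
     (\<forall>X \<in> Ob C. \<forall>Y \<in> Ob C. \<forall>Z \<in> Ob C. \<forall>f \<in> hom C X Y. \<forall>g \<in> hom C Y Z.
        shM C (comp C g f) = comp C (shM C g) (shM C f)) \<and>
     (\<forall>X \<in> Ob C. \<forall>Y \<in> Ob C. \<forall>f \<in> hom C X Y. \<forall>g \<in> hom C X Y.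
        shM C (madd C f g) = madd C (shM C f) (shM C g)) \<and>
     (\<forall>X \<in> Ob C. \<forall>Y \<in> Ob C. bij_betw (shM C) (hom C X Y) (hom C (shO C X) (shO C Y))) \<and>
     (\<forall>Y \<in> Ob C. \<exists>X \<in> Ob C. isomorphic C (shO C X) Y)"

definition is_candidate :: "('o, 'm, 'x) tricat_scheme \<Rightarrow> ('o \<times> 'o \<times> 'o \<times> 'm \<times> 'm \<times> 'm) \<Rightarrow> bool" where
  "is_candidate C T \<longleftrightarrow> (case T of (X, Y, Z, f, g, h) \<Rightarrow>
     X \<in> Ob C \<and> Y \<in> Ob C \<and> Z \<in> Ob C \<and>
     f \<in> hom C X Y \<and> g \<in> hom C Y Z \<and> h \<in> hom C Z (shO C X))"

definition is_triangulated :: "('o, 'm, 'x) tricat_scheme \<Rightarrow> bool" where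
  "is_triangulated C \<longleftrightarrow> is_additive C \<and> shift_autoequivalence C \<and>
     (\<forall>T \<in> Tri C. is_candidate C T) \<and>
     \<comment> \<open>TR1: closed under isomorphism of triangles\<close>
     (\<forall>X Y Z f g h X' Y' Z' f' g' h' a b c.
        (X, Y, Z, f, g, h) \<in> Tri C \<and> is_candidate C (X', Y', Z', f', g', h') \<and>
        a \<in> hom C X X' \<and> b \<in> hom C Y Y' \<and> c \<in> hom C Z Z' \<and>
        is_iso C a \<and> is_iso C b \<and> is_iso C c \<and>
        comp C b f = comp C f' a \<and> comp C c g = comp C g' b \<and>
        comp C (shM C a) h = comp C h' c
        \<longrightarrow> (X', Y', Z', f', g', h') \<in> Tri C) \<and>
     \<comment> \<open>TR1: X --id--> X --> 0 --> X[1] is exact\<close>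
     (\<forall>X \<in> Ob C. \<forall>Z. is_zero_obj C Z \<longrightarrow>
        (X, X, Z, ident C X, mzero C X Z, mzero C Z (shO C X)) \<in> Tri C) \<and>
     \<comment> \<open>TR1: every morphism embeds in an exact triangle\<close>
     (\<forall>X \<in> Ob C. \<forall>Y \<in> Ob C. \<forall>f \<in> hom C X Y. \<exists>Z g h. (X, Y, Z, f, g, h) \<in> Tri C) \<and>
     \<comment> \<open>TR2: rotation\<close>
     (\<forall>X Y Z f g h. is_candidate C (X, Y, Z, f, g, h) \<longrightarrow>
        ((X, Y, Z, f, g, h) \<in> Tri C \<longleftrightarrow>
         (Y, Z, shO C X, g, h, mneg C (shM C f)) \<in> Tri C)) \<and>
     \<comment> \<open>TR3: morphisms of triangles\<close>
     (\<forall>X Y Z f g h X' Y' Z' f' g' h' a b.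
        (X, Y, Z, f, g, h) \<in> Tri C \<and> (X', Y', Z', f', g', h') \<in> Tri C \<and>
        a \<in> hom C X X' \<and> b \<in> hom C Y Y' \<and> comp C b f = comp C f' a
        \<longrightarrow> (\<exists>c \<in> hom C Z Z'. comp C c g = comp C g' b \<and>
                comp C (shM C a) h = comp C h' c)) \<and>
     \<comment> \<open>TR4: octahedral axiom\<close>
     (\<forall>X Y Z f g Z' h j X' k l Y' m n.
        f \<in> hom C X Y \<and> g \<in> hom C Y Z \<and>
        (X, Y, Z', f, h, j) \<in> Tri C \<and> (Y, Z, X', g, k, l) \<in> Tri C \<and>
        (X, Z, Y', comp C g f, m, n) \<in> Tri C
        \<longrightarrow> (\<exists>u v. (Z', Y', X', u, v, comp C (shM C h) l) \<in> Tri C \<and>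
                comp C u h = comp C m g \<and> comp C n u = j \<and>
                comp C v m = k \<and> comp C l v = comp C (shM C f) n))"

text \<open>Dense subcategories (given by their object class; full by definition).\<close>
definition is_triangulated_subcat :: "('o, 'm, 'x) tricat_scheme \<Rightarrow> 'o set \<Rightarrow> bool" where
  "is_triangulated_subcat C D \<longleftrightarrow> D \<subseteq> Ob C \<and>
     (\<forall>X \<in> Ob C. X \<in> D \<longleftrightarrow> shO C X \<in> D) \<and>
     (\<forall>X \<in> D. \<forall>Y \<in> Ob C. isomorphic C X Y \<longrightarrow> Y \<in> D) \<and>
     (\<forall>X Y Z f g h. (X, Y, Z, f, g, h) \<in> Tri C \<and> X \<in> D \<and> Y \<in> D \<longrightarrow> Z \<in> D)"

definition is_dense_subcat :: "('o, 'm, 'x) tricat_scheme \<Rightarrow> 'o set \<Rightarrow> bool" where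
  "is_dense_subcat C D \<longleftrightarrow> is_triangulated_subcat C D \<and>
     (\<forall>U \<in> Ob C. \<exists>V \<in> Ob C. \<exists>S. is_biproduct C S U V \<and> S \<in> D)"

fun is_power :: "('o, 'm, 'x) tricat_scheme \<Rightarrow> nat \<Rightarrow> 'o \<Rightarrow> 'o \<Rightarrow> bool" where
  "is_power C 0 S U = is_zero_obj C S"
| "is_power C (Suc 0) S U = (U \<in> Ob C \<and> S \<in> Ob C \<and> isomorphic C S U)"
| "is_power C (Suc (Suc n)) S U = (\<exists>T. is_power C (Suc n) T U \<and> is_biproduct C S T U)"

definition is_radical :: "('o, 'm, 'x) tricat_scheme \<Rightarrow> 'o set \<Rightarrow> bool" where
  "is_radical C D \<longleftrightarrow>
     (\<forall>U \<in> Ob C. \<forall>n \<ge> 1. (\<exists>S \<in> D. is_power C n S U) \<longrightarrow> U \<in> D)"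

text \<open>Grothendieck group: free abelian group on objects (functions 'o \<Rightarrow> int with finite
support), modulo the subgroup grel generated by [X] - [Y] for isomorphic X, Y and
[V] - [U] - [W] for exact triangles U \<rightarrow> V \<rightarrow> W \<rightarrow> U[1].\<close>
definition gen :: "'o \<Rightarrow> 'o \<Rightarrow> int" where
  "gen X = (\<lambda>Y. if Y = X then 1 else 0)"

inductive_set grel :: "('o, 'm, 'x) tricat_scheme \<Rightarrow> ('o \<Rightarrow> int) set" for C where
  grel_zero: "(\<lambda>_. 0) \<in> grel C"
| grel_iso: "X \<in> Ob C \<Longrightarrow> Y \<in> Ob C \<Longrightarrow> isomorphic C X Y \<Longrightarrow>
     (\<lambda>A. gen X A - gen Y A) \<in> grel C"
| grel_tri: "(U, V, W, f, g, h) \<in> Tri C \<Longrightarrow>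
     (\<lambda>A. gen V A - gen U A - gen W A) \<in> grel C"
| grel_add: "a \<in> grel C \<Longrightarrow> b \<in> grel C \<Longrightarrow> (\<lambda>A. a A + b A) \<in> grel C"
| grel_neg: "a \<in> grel C \<Longrightarrow> (\<lambda>A. - a A) \<in> grel C"

definition class_torsion :: "('o, 'm, 'x) tricat_scheme \<Rightarrow> 'o \<Rightarrow> bool" where
  "class_torsion C U \<longleftrightarrow> (\<exists>n::nat. n \<ge> 1 \<and> (\<lambda>A. int n * gen U A) \<in> grel C)"

end

theory Submission
  imports Defs "HOL-Algebra.Group" "HOL-Algebra.FiniteProduct"
begin

locale tc =
  fixes C :: "('o, 'm) tricat"
  assumes tri: "is_triangulated C"
begin

abbreviation cp (infixr "\<cdot>" 75) where "g \<cdot> f \<equiv> comp C g f"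
abbreviation ad (infixl "\<boxplus>" 65) where "f \<boxplus> g \<equiv> madd C f g"
abbreviation "ng f \<equiv> mneg C f"
abbreviation "z X Y \<equiv> mzero C X Y"
abbreviation "idt X \<equiv> ident C X"
abbreviation "sh X \<equiv> shO C X"
abbreviation "sm f \<equiv> shM C f"

lemma addi: "is_additive C" using tri[unfolded is_triangulated_def] by (rule conjunct1)
lemma preadd: "is_preadditive C" using addi[unfolded is_additive_def] by (rule conjunct1)
lemma cat: "is_category C" using preadd[unfolded is_preadditive_def] by (rule conjunct1)

lemma hom_iff: "f \<in> Defs.hom C X Y \<longleftrightarrow> f \<in> Mor C \<and> dom C f = X \<and> cod C f = Y"
  by (simp add: Defs.hom_def)

lemma C1: "f \<in> Mor C \<Longrightarrow> dom C f \<in> Ob C \<and> cod C f \<in> Ob C"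
  using cat[unfolded is_category_def, THEN conjunct1] by blast
lemma C2: "X \<in> Ob C \<Longrightarrow> ident C X \<in> Defs.hom C X X"
  using cat[unfolded is_category_def, THEN conjunct2[THEN conjunct1]] by blast
lemma C3: "X \<in> Ob C \<Longrightarrow> Y \<in> Ob C \<Longrightarrow> Z \<in> Ob C \<Longrightarrow> f \<in> Defs.hom C X Y \<Longrightarrow> g \<in> Defs.hom C Y Z \<Longrightarrow> g \<cdot> f \<in> Defs.hom C X Z"
  using cat[unfolded is_category_def, THEN conjunct2[THEN conjunct2, THEN conjunct1]] by blast
lemma C4: "X \<in> Ob C \<Longrightarrow> Y \<in> Ob C \<Longrightarrow> f \<in> Defs.hom C X Y \<Longrightarrow> f \<cdot> idt X = f \<and> idt Y \<cdot> f = f"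
  using cat[unfolded is_category_def, THEN conjunct2[THEN conjunct2, THEN conjunct2, THEN conjunct1]] by blast
lemma C5: "W \<in> Ob C \<Longrightarrow> X \<in> Ob C \<Longrightarrow> Y \<in> Ob C \<Longrightarrow> Z \<in> Ob C \<Longrightarrow>
        f \<in> Defs.hom C W X \<Longrightarrow> g \<in> Defs.hom C X Y \<Longrightarrow> h \<in> Defs.hom C Y Z \<Longrightarrow> h \<cdot> (g \<cdot> f) = (h \<cdot> g) \<cdot> f"
  using cat[unfolded is_category_def, THEN conjunct2[THEN conjunct2, THEN conjunct2, THEN conjunct2]] by blast
lemma P1: "X \<in> Ob C \<Longrightarrow> Y \<in> Ob C \<Longrightarrow> mzero C X Y \<in> Defs.hom C X Y"
  using preadd[unfolded is_preadditive_def] by blast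
lemma P2: "X \<in> Ob C \<Longrightarrow> Y \<in> Ob C \<Longrightarrow> f \<in> Defs.hom C X Y \<Longrightarrow> g \<in> Defs.hom C X Y \<Longrightarrow> f \<boxplus> g \<in> Defs.hom C X Y \<and> f \<boxplus> g = g \<boxplus> f"
  using preadd[unfolded is_preadditive_def] by blast
lemma P3: "X \<in> Ob C \<Longrightarrow> Y \<in> Ob C \<Longrightarrow> f \<in> Defs.hom C X Y \<Longrightarrow> g \<in> Defs.hom C X Y \<Longrightarrow> h \<in> Defs.hom C X Y \<Longrightarrow> (f \<boxplus> g) \<boxplus> h = f \<boxplus> (g \<boxplus> h)"
  using preadd[unfolded is_preadditive_def] by blast
lemma P4: "X \<in> Ob C \<Longrightarrow> Y \<in> Ob C \<Longrightarrow> f \<in> Defs.hom C X Y \<Longrightarrow> f \<boxplus> z X Y = f \<and> ng f \<in> Defs.hom C X Y \<and> f \<boxplus> ng f = z X Y"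
  using preadd[unfolded is_preadditive_def] by blast
lemma P5: "X \<in> Ob C \<Longrightarrow> Y \<in> Ob C \<Longrightarrow> Z \<in> Ob C \<Longrightarrow> f \<in> Defs.hom C X Y \<Longrightarrow> g \<in> Defs.hom C Y Z \<Longrightarrow> g' \<in> Defs.hom C Y Z \<Longrightarrow>
   (g \<boxplus> g') \<cdot> f = g \<cdot> f \<boxplus> g' \<cdot> f"
  using preadd[unfolded is_preadditive_def] by blast
lemma P6: "X \<in> Ob C \<Longrightarrow> Y \<in> Ob C \<Longrightarrow> Z \<in> Ob C \<Longrightarrow> f \<in> Defs.hom C X Y \<Longrightarrow> f' \<in> Defs.hom C X Y \<Longrightarrow> g \<in> Defs.hom C Y Z \<Longrightarrow>
   g \<cdot> (f \<boxplus> f') = g \<cdot> f \<boxplus> g \<cdot> f'"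
  using preadd[unfolded is_preadditive_def] by blast

lemma mor_ob [simp]: "f \<in> Mor C \<Longrightarrow> dom C f \<in> Ob C" "f \<in> Mor C \<Longrightarrow> cod C f \<in> Ob C"
  using C1 by auto

lemma ident_simps [simp]: "X \<in> Ob C \<Longrightarrow> idt X \<in> Mor C" "X \<in> Ob C \<Longrightarrow> dom C (idt X) = X"
  "X \<in> Ob C \<Longrightarrow> cod C (idt X) = X"
  using C2 by (auto simp: hom_iff)

lemma comp_simps [simp]:
  assumes "f \<in> Mor C" "g \<in> Mor C" "dom C g = cod C f"
  shows "g \<cdot> f \<in> Mor C" "dom C (g \<cdot> f) = dom C f" "cod C (g \<cdot> f) = cod C g"
  using C3[of "dom C f" "cod C f" "cod C g" f g] assms by (auto simp: hom_iff)

lemma id_right [simp]: "f \<in> Mor C \<Longrightarrow> dom C f = X \<Longrightarrow> f \<cdot> idt X = f"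
  using C4[of "dom C f" "cod C f" f] by (auto simp: hom_iff)

lemma id_left [simp]: "f \<in> Mor C \<Longrightarrow> cod C f = Y \<Longrightarrow> idt Y \<cdot> f = f"
  using C4[of "dom C f" "cod C f" f] by (auto simp: hom_iff)

lemma assoc [simp]:
  assumes "f \<in> Mor C" "g \<in> Mor C" "h \<in> Mor C" "dom C g = cod C f" "dom C h = cod C g"
  shows "(h \<cdot> g) \<cdot> f = h \<cdot> (g \<cdot> f)"
  using C5[of "dom C f" "cod C f" "cod C g" "cod C h" f g h] assms by (auto simp: hom_iff)

lemma add_simps [simp]:
  assumes "f \<in> Mor C" "g \<in> Mor C" "dom C g = dom C f" "cod C g = cod C f"
  shows "f \<boxplus> g \<in> Mor C" "dom C (f \<boxplus> g) = dom C f" "cod C (f \<boxplus> g) = cod C f"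
  using P2[of "dom C f" "cod C f" f g] assms by (auto simp: hom_iff)

lemma add_comm:
  assumes "f \<in> Mor C" "g \<in> Mor C" "dom C g = dom C f" "cod C g = cod C f"
  shows "f \<boxplus> g = g \<boxplus> f"
  using P2[of "dom C f" "cod C f" f g] assms by (auto simp: hom_iff)

lemma add_assoc:
  assumes "f \<in> Mor C" "g \<in> Mor C" "h \<in> Mor C" "dom C g = dom C f" "cod C g = cod C f"
     "dom C h = dom C f" "cod C h = cod C f"
  shows "(f \<boxplus> g) \<boxplus> h = f \<boxplus> (g \<boxplus> h)"
  using P3[of "dom C f" "cod C f" f g h] assms by (auto simp: hom_iff)

lemma zero_simps [simp]:
  "X \<in> Ob C \<Longrightarrow> Y \<in> Ob C \<Longrightarrow> z X Y \<in> Mor C"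
  "X \<in> Ob C \<Longrightarrow> Y \<in> Ob C \<Longrightarrow> dom C (z X Y) = X"
  "X \<in> Ob C \<Longrightarrow> Y \<in> Ob C \<Longrightarrow> cod C (z X Y) = Y"
  using P1 by (auto simp: hom_iff)

lemma add_zero_right [simp]: "f \<in> Mor C \<Longrightarrow> dom C f = X \<Longrightarrow> cod C f = Y \<Longrightarrow> f \<boxplus> z X Y = f"
  using P4[of "dom C f" "cod C f" f] by (auto simp: hom_iff)

lemma neg_simps [simp]:
  assumes "f \<in> Mor C"
  shows "ng f \<in> Mor C" "dom C (ng f) = dom C f" "cod C (ng f) = cod C f"
  using P4[of "dom C f" "cod C f" f] assms by (auto simp: hom_iff)

lemma add_neg_right [simp]: "f \<in> Mor C \<Longrightarrow> f \<boxplus> ng f = z (dom C f) (cod C f)"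
  using P4[of "dom C f" "cod C f" f] by (auto simp: hom_iff)

lemma add_zero_left [simp]: "f \<in> Mor C \<Longrightarrow> dom C f = X \<Longrightarrow> cod C f = Y \<Longrightarrow> z X Y \<boxplus> f = f"
proof -
  assume a: "f \<in> Mor C" "dom C f = X" "cod C f = Y"
  then have "z X Y \<boxplus> f = f \<boxplus> z X Y" by (intro add_comm) auto
  then show ?thesis using a by simp
qed

lemma add_neg_left [simp]: "f \<in> Mor C \<Longrightarrow> ng f \<boxplus> f = z (dom C f) (cod C f)"
  using add_comm[of f "ng f"] by simp

lemma distr_left [simp]:
  assumes "f \<in> Mor C" "g \<in> Mor C" "g' \<in> Mor C" "dom C g = cod C f" "dom C g' = dom C g" "cod C g' = cod C g"
  shows "(g \<boxplus> g') \<cdot> f = g \<cdot> f \<boxplus> g' \<cdot> f"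
  using P5[of "dom C f" "cod C f" "cod C g" f g g'] assms by (auto simp: hom_iff)

lemma distr_right [simp]:
  assumes "f \<in> Mor C" "f' \<in> Mor C" "g \<in> Mor C" "dom C g = cod C f" "dom C f' = dom C f" "cod C f' = cod C f"
  shows "g \<cdot> (f \<boxplus> f') = g \<cdot> f \<boxplus> g \<cdot> f'"
  using P6[of "dom C f" "cod C f" "cod C g" f f' g] assms by (auto simp: hom_iff)

lemma add_cancel_left:
  assumes "a \<in> Mor C" "b \<in> Mor C" "c \<in> Mor C" "dom C b = dom C a" "cod C b = cod C a"
    "dom C c = dom C a" "cod C c = cod C a" "a \<boxplus> b = a \<boxplus> c"
  shows "b = c"
proof -
  have "ng a \<boxplus> (a \<boxplus> b) = ng a \<boxplus> (a \<boxplus> c)" using assms by simp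
  moreover have "(ng a \<boxplus> a) \<boxplus> b = ng a \<boxplus> (a \<boxplus> b)" by (rule add_assoc) (use assms in auto)
  moreover have "(ng a \<boxplus> a) \<boxplus> c = ng a \<boxplus> (a \<boxplus> c)" by (rule add_assoc) (use assms in auto)
  ultimately have "(ng a \<boxplus> a) \<boxplus> b = (ng a \<boxplus> a) \<boxplus> c" by simp
  then show ?thesis using assms by simp
qed

lemma idem_zero:
  assumes "a \<in> Mor C" "a \<boxplus> a = a"
  shows "a = z (dom C a) (cod C a)"
  using add_cancel_left[of a a "z (dom C a) (cod C a)"] assms by simp

lemma neg_unique:
  assumes "a \<in> Mor C" "b \<in> Mor C" "dom C b = dom C a" "cod C b = cod C a" "a \<boxplus> b = z (dom C a) (cod C a)"
  shows "b = ng a"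
  using add_cancel_left[of a b "ng a"] assms by simp

lemma eq_of_diff_zero:
  assumes "a \<in> Mor C" "b \<in> Mor C" "dom C b = dom C a" "cod C b = cod C a" "a \<boxplus> ng b = z (dom C a) (cod C a)"
  shows "a = b"
proof -
  have "ng b \<boxplus> a = z (dom C a) (cod C a)" using assms by (simp add: add_comm)
  then have "a = ng (ng b)" using neg_unique[of "ng b" a] assms by simp
  moreover have "b = ng (ng b)" using neg_unique[of "ng b" b] assms by simp
  ultimately show ?thesis by simp
qed

lemma neg_neg [simp]: "a \<in> Mor C \<Longrightarrow> ng (ng a) = a"
  using neg_unique[of "ng a" a] by simp

lemma comp_zero_right [simp]:
  assumes "f \<in> Mor C" "dom C f = Y" "W \<in> Ob C"
  shows "f \<cdot> z W Y = z W (cod C f)"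
proof -
  have Y: "Y \<in> Ob C" using assms mor_ob by blast
  have "f \<cdot> (z W Y \<boxplus> z W Y) = f \<cdot> z W Y \<boxplus> f \<cdot> z W Y" by (rule distr_right) (use assms Y in auto)
  then have "f \<cdot> z W Y = f \<cdot> z W Y \<boxplus> f \<cdot> z W Y" using Y assms(3) by simp
  then show ?thesis using idem_zero[of "f \<cdot> z W Y"] assms Y by simp
qed

lemma comp_zero_left [simp]:
  assumes "f \<in> Mor C" "cod C f = Y" "W \<in> Ob C"
  shows "z Y W \<cdot> f = z (dom C f) W"
proof -
  have Y: "Y \<in> Ob C" using assms mor_ob by blast
  have "(z Y W \<boxplus> z Y W) \<cdot> f = z Y W \<cdot> f \<boxplus> z Y W \<cdot> f" by (rule distr_left) (use assms Y in auto)
  then have "z Y W \<cdot> f = z Y W \<cdot> f \<boxplus> z Y W \<cdot> f" using Y assms(3) by simp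
  then show ?thesis using idem_zero[of "z Y W \<cdot> f"] assms Y by simp
qed

lemma comp_neg_right [simp]:
  assumes "f \<in> Mor C" "g \<in> Mor C" "dom C g = cod C f"
  shows "g \<cdot> ng f = ng (g \<cdot> f)"
proof -
  have "g \<cdot> f \<boxplus> g \<cdot> ng f = g \<cdot> (f \<boxplus> ng f)" by (rule distr_right[symmetric]) (use assms in auto)
  also have "\<dots> = z (dom C f) (cod C g)" using assms by simp
  finally show ?thesis using neg_unique[of "g \<cdot> f" "g \<cdot> ng f"] assms by simp
qed

lemma comp_neg_left [simp]:
  assumes "f \<in> Mor C" "g \<in> Mor C" "dom C g = cod C f"
  shows "ng g \<cdot> f = ng (g \<cdot> f)"
proof -
  have "g \<cdot> f \<boxplus> ng g \<cdot> f = (g \<boxplus> ng g) \<cdot> f" by (rule distr_left[symmetric]) (use assms in auto)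
  also have "\<dots> = z (dom C f) (cod C g)" using assms by simp
  finally show ?thesis using neg_unique[of "g \<cdot> f" "ng g \<cdot> f"] assms by simp
qed

lemma neg_zero [simp]: "X \<in> Ob C \<Longrightarrow> Y \<in> Ob C \<Longrightarrow> ng (z X Y) = z X Y"
  using neg_unique[of "z X Y" "z X Y"] by simp


lemma assocL:
  assumes "p \<cdot> i = w" "p \<in> Mor C" "i \<in> Mor C" "x \<in> Mor C" "dom C p = cod C i" "dom C i = cod C x"
  shows "p \<cdot> (i \<cdot> x) = w \<cdot> x"
  using assoc[of x i p] assms by simp

lemma SA: "shift_autoequivalence C"
  using tri[unfolded is_triangulated_def] by (elim conjE)

lemma S1: "X \<in> Ob C \<Longrightarrow> sh X \<in> Ob C \<and> sm (idt X) = idt (sh X)"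
  using SA[unfolded shift_autoequivalence_def, THEN conjunct1] by blast
lemma S2: "X \<in> Ob C \<Longrightarrow> Y \<in> Ob C \<Longrightarrow> f \<in> Defs.hom C X Y \<Longrightarrow> sm f \<in> Defs.hom C (sh X) (sh Y)"
  using SA[unfolded shift_autoequivalence_def, THEN conjunct2, THEN conjunct1] by blast
lemma S3: "X \<in> Ob C \<Longrightarrow> Y \<in> Ob C \<Longrightarrow> Z \<in> Ob C \<Longrightarrow> f \<in> Defs.hom C X Y \<Longrightarrow> g \<in> Defs.hom C Y Z \<Longrightarrow> sm (g \<cdot> f) = sm g \<cdot> sm f"
  using SA[unfolded shift_autoequivalence_def, THEN conjunct2, THEN conjunct2, THEN conjunct1] by blast
lemma S4: "X \<in> Ob C \<Longrightarrow> Y \<in> Ob C \<Longrightarrow> f \<in> Defs.hom C X Y \<Longrightarrow> g \<in> Defs.hom C X Y \<Longrightarrow> sm (f \<boxplus> g) = sm f \<boxplus> sm g"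
  using SA[unfolded shift_autoequivalence_def, THEN conjunct2, THEN conjunct2, THEN conjunct2, THEN conjunct1] by blast
lemma S5: "X \<in> Ob C \<Longrightarrow> Y \<in> Ob C \<Longrightarrow> bij_betw (shM C) (Defs.hom C X Y) (Defs.hom C (sh X) (sh Y))"
  using SA[unfolded shift_autoequivalence_def, THEN conjunct2, THEN conjunct2, THEN conjunct2, THEN conjunct2, THEN conjunct1] by blast

lemma sh_ob [simp]: "X \<in> Ob C \<Longrightarrow> sh X \<in> Ob C" using S1 by blast
lemma sm_id [simp]: "X \<in> Ob C \<Longrightarrow> sm (idt X) = idt (sh X)" using S1 by blast

lemma sm_simps [simp]:
  assumes "f \<in> Mor C"
  shows "sm f \<in> Mor C" "dom C (sm f) = sh (dom C f)" "cod C (sm f) = sh (cod C f)"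
  using S2[of "dom C f" "cod C f" f] assms by (auto simp: hom_iff)

lemma sm_comp [simp]:
  assumes "f \<in> Mor C" "g \<in> Mor C" "dom C g = cod C f"
  shows "sm (g \<cdot> f) = sm g \<cdot> sm f"
  using S3[of "dom C f" "cod C f" "cod C g" f g] assms by (auto simp: hom_iff)

lemma sm_add [simp]:
  assumes "f \<in> Mor C" "g \<in> Mor C" "dom C g = dom C f" "cod C g = cod C f"
  shows "sm (f \<boxplus> g) = sm f \<boxplus> sm g"
  using S4[of "dom C f" "cod C f" f g] assms by (auto simp: hom_iff)

lemma sm_zero [simp]:
  assumes "X \<in> Ob C" "Y \<in> Ob C"
  shows "sm (z X Y) = z (sh X) (sh Y)"
proof -
  have "sm (z X Y \<boxplus> z X Y) = sm (z X Y) \<boxplus> sm (z X Y)" by (rule sm_add) (use assms in auto)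
  then have "sm (z X Y) = sm (z X Y) \<boxplus> sm (z X Y)" using assms by simp
  then show ?thesis using idem_zero[of "sm (z X Y)"] assms by simp
qed

lemma sm_neg [simp]:
  assumes "f \<in> Mor C"
  shows "sm (ng f) = ng (sm f)"
proof -
  have "sm f \<boxplus> sm (ng f) = sm (f \<boxplus> ng f)" by (rule sm_add[symmetric]) (use assms in auto)
  also have "\<dots> = z (dom C (sm f)) (cod C (sm f))" using assms by simp
  finally show ?thesis using neg_unique[of "sm f" "sm (ng f)"] assms by simp
qed

lemma sm_inj:
  assumes "f \<in> Mor C" "g \<in> Mor C" "dom C g = dom C f" "cod C g = cod C f" "sm f = sm g"
  shows "f = g"
  using S5[of "dom C f" "cod C f"] assms unfolding bij_betw_def inj_on_def by (auto simp: hom_iff)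

lemma sm_surj:
  assumes "X \<in> Ob C" "Y \<in> Ob C" "g \<in> Mor C" "dom C g = sh X" "cod C g = sh Y"
  shows "\<exists>f. f \<in> Mor C \<and> dom C f = X \<and> cod C f = Y \<and> sm f = g"
proof -
  have "g \<in> shM C ` Defs.hom C X Y" using S5[OF assms(1,2)] assms unfolding bij_betw_def by (auto simp: hom_iff)
  then show ?thesis by (auto simp: hom_iff)
qed

lemma TA: "(\<forall>T \<in> Tri C. is_candidate C T)"
  using tri[unfolded is_triangulated_def] by (elim conjE)

lemma tri_cand:
  assumes "(X, Y, Z, f, g, h) \<in> Tri C"
  shows "X \<in> Ob C" "Y \<in> Ob C" "Z \<in> Ob C" "f \<in> Mor C" "dom C f = X" "cod C f = Y"
    "g \<in> Mor C" "dom C g = Y" "cod C g = Z" "h \<in> Mor C" "dom C h = Z" "cod C h = sh X"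
  using TA assms unfolding is_candidate_def by (auto simp: hom_iff)

lemma TR1iso:
  assumes "(X, Y, Z, f, g, h) \<in> Tri C" "is_candidate C (X', Y', Z', f', g', h')"
    "a \<in> Defs.hom C X X'" "b \<in> Defs.hom C Y Y'" "c \<in> Defs.hom C Z Z'"
    "Defs.is_iso C a" "Defs.is_iso C b" "Defs.is_iso C c"
    "b \<cdot> f = f' \<cdot> a" "c \<cdot> g = g' \<cdot> b" "sm a \<cdot> h = h' \<cdot> c"
  shows "(X', Y', Z', f', g', h') \<in> Tri C"
proof -
  have ax: "(\<forall>X Y Z f g h X' Y' Z' f' g' h' a b c.
        (X, Y, Z, f, g, h) \<in> Tri C \<and> is_candidate C (X', Y', Z', f', g', h') \<and>
        a \<in> Defs.hom C X X' \<and> b \<in> Defs.hom C Y Y' \<and> c \<in> Defs.hom C Z Z' \<and>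
        Defs.is_iso C a \<and> Defs.is_iso C b \<and> Defs.is_iso C c \<and>
        comp C b f = comp C f' a \<and> comp C c g = comp C g' b \<and>
        comp C (shM C a) h = comp C h' c
        \<longrightarrow> (X', Y', Z', f', g', h') \<in> Tri C)"
    using tri[unfolded is_triangulated_def] by (elim conjE)
  show ?thesis
    apply (rule ax[rule_format])
    using assms by blast
qed

lemma TR1zero:
  assumes "X \<in> Ob C" "is_zero_obj C Z"
  shows "(X, X, Z, idt X, z X Z, z Z (sh X)) \<in> Tri C"
proof -
  have ax: "(\<forall>X \<in> Ob C. \<forall>Z. is_zero_obj C Z \<longrightarrow>
        (X, X, Z, ident C X, mzero C X Z, mzero C Z (shO C X)) \<in> Tri C)"
    using tri[unfolded is_triangulated_def] by (elim conjE)
  then show ?thesis using assms by blast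
qed

lemma TR1ex:
  assumes "f \<in> Mor C"
  shows "\<exists>Z g h. (dom C f, cod C f, Z, f, g, h) \<in> Tri C"
proof -
  have ax: "(\<forall>X \<in> Ob C. \<forall>Y \<in> Ob C. \<forall>f \<in> Defs.hom C X Y. \<exists>Z g h. (X, Y, Z, f, g, h) \<in> Tri C)"
    using tri[unfolded is_triangulated_def] by (elim conjE)
  then show ?thesis using assms by (auto simp: hom_iff)
qed

lemma rot:
  assumes "(X, Y, Z, f, g, h) \<in> Tri C"
  shows "(Y, Z, sh X, g, h, ng (sm f)) \<in> Tri C"
proof -
  have ax: "(\<forall>X Y Z f g h. is_candidate C (X, Y, Z, f, g, h) \<longrightarrow>
        ((X, Y, Z, f, g, h) \<in> Tri C \<longleftrightarrow>
         (Y, Z, shO C X, g, h, mneg C (shM C f)) \<in> Tri C))"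
    using tri[unfolded is_triangulated_def] by (elim conjE)
  then show ?thesis using assms TA by blast
qed

lemma TR3:
  assumes "(X, Y, Z, f, g, h) \<in> Tri C" "(X', Y', Z', f', g', h') \<in> Tri C"
    "a \<in> Defs.hom C X X'" "b \<in> Defs.hom C Y Y'" "b \<cdot> f = f' \<cdot> a"
  shows "\<exists>c \<in> Defs.hom C Z Z'. c \<cdot> g = g' \<cdot> b \<and> sm a \<cdot> h = h' \<cdot> c"
proof -
  have ax: "(\<forall>X Y Z f g h X' Y' Z' f' g' h' a b.
        (X, Y, Z, f, g, h) \<in> Tri C \<and> (X', Y', Z', f', g', h') \<in> Tri C \<and>
        a \<in> Defs.hom C X X' \<and> b \<in> Defs.hom C Y Y' \<and> comp C b f = comp C f' a
        \<longrightarrow> (\<exists>c \<in> Defs.hom C Z Z'. comp C c g = comp C g' b \<and>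
                comp C (shM C a) h = comp C h' c))"
    using tri[unfolded is_triangulated_def] by (elim conjE)
  show ?thesis
    apply (rule ax[rule_format])
    using assms by blast
qed

lemma TR4:
  assumes "f \<in> Defs.hom C X Y" "g \<in> Defs.hom C Y Z"
    "(X, Y, Z', f, h, j) \<in> Tri C" "(Y, Z, X', g, k, l) \<in> Tri C"
    "(X, Z, Y', g \<cdot> f, m, n) \<in> Tri C"
  shows "\<exists>u v. (Z', Y', X', u, v, sm h \<cdot> l) \<in> Tri C \<and>
                u \<cdot> h = m \<cdot> g \<and> n \<cdot> u = j \<and>
                v \<cdot> m = k \<and> l \<cdot> v = sm f \<cdot> n"
proof -
  have ax: "(\<forall>X Y Z f g Z' h j X' k l Y' m n.
        f \<in> Defs.hom C X Y \<and> g \<in> Defs.hom C Y Z \<and>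
        (X, Y, Z', f, h, j) \<in> Tri C \<and> (Y, Z, X', g, k, l) \<in> Tri C \<and>
        (X, Z, Y', comp C g f, m, n) \<in> Tri C
        \<longrightarrow> (\<exists>u v. (Z', Y', X', u, v, comp C (shM C h) l) \<in> Tri C \<and>
                comp C u h = comp C m g \<and> comp C n u = j \<and>
                comp C v m = k \<and> comp C l v = comp C (shM C f) n))"
    using tri[unfolded is_triangulated_def] by (elim conjE)
  show ?thesis
    apply (rule ax[rule_format])
    using assms by blast
qed

lemma zero_ex: "\<exists>Z0. is_zero_obj C Z0"
  using addi unfolding is_additive_def by blast

lemma zero_ob: "is_zero_obj C Z0 \<Longrightarrow> Z0 \<in> Ob C"
  unfolding is_zero_obj_def by blast

lemma zero_from:
  assumes "is_zero_obj C Z0" "f \<in> Mor C" "dom C f = Z0"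
  shows "f = z Z0 (cod C f)"
proof -
  have "Defs.hom C Z0 (cod C f) = {z Z0 (cod C f)}" using assms(1) mor_ob[OF assms(2)] unfolding is_zero_obj_def by blast
  moreover have "f \<in> Defs.hom C Z0 (cod C f)" using assms by (simp add: hom_iff)
  ultimately show ?thesis by blast
qed

lemma zero_to:
  assumes "is_zero_obj C Z0" "f \<in> Mor C" "cod C f = Z0"
  shows "f = z (dom C f) Z0"
proof -
  have "Defs.hom C (dom C f) Z0 = {z (dom C f) Z0}" using assms(1) mor_ob[OF assms(2)] unfolding is_zero_obj_def by blast
  moreover have "f \<in> Defs.hom C (dom C f) Z0" using assms by (simp add: hom_iff)
  ultimately show ?thesis by blast
qed

end


context tc
begin

lemma iso_idt: "X \<in> Ob C \<Longrightarrow> Defs.is_iso C (idt X)"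
  unfolding Defs.is_iso_def by (rule conjI, simp, rule bexI[of _ "idt X"]) (auto simp: hom_iff)

lemma isoI:
  assumes "k \<in> Mor C" "k' \<in> Mor C" "dom C k' = cod C k" "cod C k' = dom C k"
    "k' \<cdot> k = idt (dom C k)" "k \<cdot> k' = idt (cod C k)"
  shows "Defs.is_iso C k"
  unfolding Defs.is_iso_def using assms by (auto simp: hom_iff)

lemma tri_comp_zero:
  assumes t: "(X, Y, Z, f, g, h) \<in> Tri C"
  shows "g \<cdot> f = z X Z"
proof -
  note c = tri_cand[OF t]
  obtain Z0 where Z0: "is_zero_obj C Z0" using zero_ex by blast
  have Z0o: "Z0 \<in> Ob C" using zero_ob[OF Z0] .
  have t0: "(X, X, Z0, idt X, z X Z0, z Z0 (sh X)) \<in> Tri C" using TR1zero[OF c(1) Z0] .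
  obtain k where k: "k \<in> Defs.hom C Z0 Z" "k \<cdot> z X Z0 = g \<cdot> f"
    using TR3[OF t0 t, of "idt X" f] c Z0o by (auto simp: hom_iff)
  then show ?thesis using c Z0o by (auto simp: hom_iff)
qed

lemma neg_inj:
  assumes "a \<in> Mor C" "b \<in> Mor C" "ng a = ng b"
  shows "a = b"
proof -
  have "a = ng (ng a)" using assms(1) by simp
  also have "\<dots> = ng (ng b)" using assms(3) by simp
  also have "\<dots> = b" using assms(2) by simp
  finally show ?thesis .
qed

lemma CE:
  assumes t: "(X, Y, Z, f, g, h) \<in> Tri C" and tm: "t \<in> Mor C" "cod C t = Y"
    and gt: "g \<cdot> t = z (dom C t) Z"
  shows "\<exists>s. s \<in> Mor C \<and> dom C s = dom C t \<and> cod C s = X \<and> f \<cdot> s = t"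
proof -
  note c = tri_cand[OF t]
  define T where "T = dom C t"
  have To: "T \<in> Ob C" using tm T_def by simp
  obtain Z0 where Z0: "is_zero_obj C Z0" using zero_ex by blast
  have Z0o: "Z0 \<in> Ob C" using zero_ob[OF Z0] .
  have r0: "(T, Z0, sh T, z T Z0, z Z0 (sh T), ng (sm (idt T))) \<in> Tri C"
    using rot[OF TR1zero[OF To Z0]] .
  have r1: "(Y, Z, sh X, g, h, ng (sm f)) \<in> Tri C" using rot[OF t] .
  have sq: "z Z0 Z \<cdot> z T Z0 = g \<cdot> t" using gt Z0o To c T_def by simp
  obtain k where k: "k \<in> Defs.hom C (sh T) (sh X)" "sm t \<cdot> ng (sm (idt T)) = ng (sm f) \<cdot> k"
    using TR3[OF r0 r1, of t "z Z0 Z"] sq tm c Z0o To T_def by (auto simp: hom_iff)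
  have "ng (sm t) = sm t \<cdot> ng (sm (idt T))" using tm To T_def by simp
  also have "\<dots> = ng (sm f) \<cdot> k" using k(2) .
  also have "\<dots> = ng (sm f \<cdot> k)" using k(1) c by (simp add: hom_iff)
  finally have "ng (sm t) = ng (sm f \<cdot> k)" .
  from neg_inj[OF _ _ this] have e: "sm t = sm f \<cdot> k" using k(1) tm c by (auto simp: hom_iff)
  obtain s where s: "s \<in> Mor C" "dom C s = T" "cod C s = X" "sm s = k"
    using sm_surj[of T X k] k To c by (auto simp: hom_iff)
  have "sm t = sm (f \<cdot> s)" using e s c by simp
  then have "t = f \<cdot> s" using sm_inj[of t "f \<cdot> s"] s c tm T_def by simp
  then show ?thesis using s T_def by auto
qed

lemma MONO:
  assumes t: "(X, Q, Y, u, v, z Y (sh X)) \<in> Tri C"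
    and e: "e \<in> Mor C" "cod C e = X" "u \<cdot> e = z (dom C e) Q"
  shows "e = z (dom C e) X"
proof -
  note c = tri_cand[OF t]
  have r2: "(Y, sh X, sh Q, z Y (sh X), ng (sm u), ng (sm v)) \<in> Tri C"
    using rot[OF rot[OF t]] by simp
  have "ng (sm u) \<cdot> sm e = ng (sm (u \<cdot> e))" using c e(1,2) by simp
  also have "\<dots> = ng (sm (z (dom C e) Q))" using e(3) by (simp only:)
  also have "\<dots> = z (sh (dom C e)) (sh Q)" using e c by simp
  finally have ue: "ng (sm u) \<cdot> sm e = z (dom C (sm e)) (sh Q)" using e by simp
  obtain s where s: "s \<in> Mor C" "dom C s = sh (dom C e)" "cod C s = Y" "z Y (sh X) \<cdot> s = sm e"
    using CE[OF r2 _ _ ue] e c by auto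
  then have "sm e = z (sh (dom C e)) (sh X)" using c by simp
  also have "\<dots> = sm (z (dom C e) X)" using e c by simp
  finally show ?thesis using sm_inj[of e "z (dom C e) X"] e c by simp
qed

definition bpd where "bpd S X Y i1 i2 p1 p2 \<longleftrightarrow> S \<in> Ob C \<and> X \<in> Ob C \<and> Y \<in> Ob C \<and>
  i1 \<in> Mor C \<and> dom C i1 = X \<and> cod C i1 = S \<and> i2 \<in> Mor C \<and> dom C i2 = Y \<and> cod C i2 = S \<and>
  p1 \<in> Mor C \<and> dom C p1 = S \<and> cod C p1 = X \<and> p2 \<in> Mor C \<and> dom C p2 = S \<and> cod C p2 = Y \<and>
  p1 \<cdot> i1 = idt X \<and> p2 \<cdot> i2 = idt Y \<and> p2 \<cdot> i1 = z X Y \<and> p1 \<cdot> i2 = z Y X \<and>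
  i1 \<cdot> p1 \<boxplus> i2 \<cdot> p2 = idt S"

lemma bp_iff: "is_biproduct C S X Y \<longleftrightarrow> (\<exists>i1 i2 p1 p2. bpd S X Y i1 i2 p1 p2)"
  unfolding is_biproduct_def bpd_def hom_iff by blast

lemma bpd_typ:
  assumes "bpd S X Y i1 i2 p1 p2"
  shows "S \<in> Ob C" "X \<in> Ob C" "Y \<in> Ob C"
  "i1 \<in> Mor C" "dom C i1 = X" "cod C i1 = S" "i2 \<in> Mor C" "dom C i2 = Y" "cod C i2 = S"
  "p1 \<in> Mor C" "dom C p1 = S" "cod C p1 = X" "p2 \<in> Mor C" "dom C p2 = S" "cod C p2 = Y"
  using assms unfolding bpd_def by blast+

lemma bpd_eq:
  assumes "bpd S X Y i1 i2 p1 p2"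
  shows "p1 \<cdot> i1 = idt X" "p2 \<cdot> i2 = idt Y" "p2 \<cdot> i1 = z X Y" "p1 \<cdot> i2 = z Y X"
  "i1 \<cdot> p1 \<boxplus> i2 \<cdot> p2 = idt S"
  using assms unfolding bpd_def by blast+

lemma L2:
  assumes t: "(X, Q, Y, u, v, z Y (sh X)) \<in> Tri C"
  shows "\<exists>s r. bpd Q X Y u s r v"
proof -
  note c = tri_cand[OF t]
  have r1: "(Q, Y, sh X, v, z Y (sh X), ng (sm u)) \<in> Tri C" using rot[OF t] .
  obtain s where s: "s \<in> Mor C" "dom C s = Y" "cod C s = Q" "v \<cdot> s = idt Y"
    using CE[OF r1, of "idt Y"] c by auto
  define t' where "t' = idt Q \<boxplus> ng (s \<cdot> v)"
  have t'm: "t' \<in> Mor C" "dom C t' = Q" "cod C t' = Q" using s c t'_def by auto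
  have vt: "v \<cdot> t' = z Q Y"
  proof -
    have "v \<cdot> t' = v \<cdot> idt Q \<boxplus> v \<cdot> ng (s \<cdot> v)" unfolding t'_def
      by (rule distr_right) (use s c in auto)
    also have "\<dots> = v \<boxplus> ng v" using s c assocL[OF s(4), of v] by simp
    finally show ?thesis using c by simp
  qed
  obtain r where r: "r \<in> Mor C" "dom C r = Q" "cod C r = X" "u \<cdot> r = t'"
    using CE[OF t, of t'] t'm vt by auto
  have vu: "v \<cdot> u = z X Y" using tri_comp_zero[OF t] .
  have t'u: "t' \<cdot> u = u" unfolding t'_def using s c vu by simp
  have t's: "t' \<cdot> s = z Y Q" unfolding t'_def using s c assocL[OF s(4), of v] by simp
  have ru: "r \<cdot> u = idt X"
  proof -
    have "u \<cdot> (r \<cdot> u \<boxplus> ng (idt X)) = u \<cdot> (r \<cdot> u) \<boxplus> u \<cdot> ng (idt X)"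
      by (rule distr_right) (use r c in auto)
    also have "\<dots> = t' \<cdot> u \<boxplus> ng u" using assocL[OF r(4), of u] r c t'm by simp
    also have "\<dots> = z X Q" using t'u c by simp
    finally have "r \<cdot> u \<boxplus> ng (idt X) = z X X" using MONO[OF t, of "r \<cdot> u \<boxplus> ng (idt X)"] r c by simp
    then show ?thesis using eq_of_diff_zero[of "r \<cdot> u" "idt X"] r c by simp
  qed
  have rs: "r \<cdot> s = z Y X"
  proof -
    have "u \<cdot> (r \<cdot> s) = t' \<cdot> s" using assocL[OF r(4), of s] r c s t'm by simp
    then have "u \<cdot> (r \<cdot> s) = z Y Q" using t's by simp
    then show ?thesis using MONO[OF t, of "r \<cdot> s"] r c s by simp
  qed
  have sum: "u \<cdot> r \<boxplus> s \<cdot> v = idt Q"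
  proof -
    have "u \<cdot> r \<boxplus> s \<cdot> v = (idt Q \<boxplus> ng (s \<cdot> v)) \<boxplus> s \<cdot> v" using r t'_def by simp
    also have "\<dots> = idt Q \<boxplus> (ng (s \<cdot> v) \<boxplus> s \<cdot> v)" by (rule add_assoc) (use s c in auto)
    also have "\<dots> = idt Q" using s c by simp
    finally show ?thesis .
  qed
  have "bpd Q X Y u s r v" unfolding bpd_def using c s r ru rs sum vu by auto
  then show ?thesis by blast
qed

lemma L1:
  assumes b: "bpd S X Y i1 i2 p1 p2"
  shows "(X, S, Y, i1, p2, z Y (sh X)) \<in> Tri C"
proof -
  note B = bpd_typ[OF b] and Be = bpd_eq[OF b]
  obtain Z g h where t: "(X, S, Z, i1, g, h) \<in> Tri C" using TR1ex[of i1] B by auto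
  note c = tri_cand[OF t]
  have r2: "(Z, sh X, sh S, h, ng (sm i1), ng (sm g)) \<in> Tri C" using rot[OF rot[OF t]] .
  have "ng (sm i1) \<cdot> h = z Z (sh S)" using tri_comp_zero[OF r2] .
  then have "ng (sm i1 \<cdot> h) = ng (z Z (sh S))" using c B by simp
  from neg_inj[OF _ _ this] have i1h: "sm i1 \<cdot> h = z Z (sh S)" using c B by auto
  have h0: "h = z Z (sh X)"
  proof -
    have "sm p1 \<cdot> sm i1 = sm (p1 \<cdot> i1)" by (rule sm_comp[symmetric]) (use B in auto)
    then have a1: "sm p1 \<cdot> sm i1 = idt (sh X)" using Be(1) B by simp
    have "h = (sm p1 \<cdot> sm i1) \<cdot> h" using a1 c by simp
    also have "\<dots> = sm p1 \<cdot> (sm i1 \<cdot> h)" by (rule assoc) (use B c in auto)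
    also have "\<dots> = z Z (sh X)" using i1h B c by simp
    finally show ?thesis .
  qed
  have t': "(X, S, Z, i1, g, z Z (sh X)) \<in> Tri C" using t h0 by simp
  obtain s r where sr: "bpd S X Z i1 s r g" using L2[OF t'] by blast
  note B2 = bpd_typ[OF sr] and B2e = bpd_eq[OF sr]
  define k where "k = p2 \<cdot> s"
  define k' where "k' = g \<cdot> i2"
  have gi1: "g \<cdot> i1 = z X Z" using tri_comp_zero[OF t] .
  have kk': "k \<cdot> k' = idt Y"
  proof -
    have "p2 \<cdot> ((i1 \<cdot> r \<boxplus> s \<cdot> g) \<cdot> i2) = idt Y" using B B2 Be B2e by simp
    moreover have "p2 \<cdot> ((i1 \<cdot> r \<boxplus> s \<cdot> g) \<cdot> i2) = k \<cdot> k'"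
      unfolding k_def k'_def using B B2 assocL[OF Be(3)] by simp
    ultimately show ?thesis by simp
  qed
  have k'k: "k' \<cdot> k = idt Z"
  proof -
    have "g \<cdot> ((i1 \<cdot> p1 \<boxplus> i2 \<cdot> p2) \<cdot> s) = idt Z" using B B2 Be B2e by simp
    moreover have "g \<cdot> ((i1 \<cdot> p1 \<boxplus> i2 \<cdot> p2) \<cdot> s) = k' \<cdot> k"
      unfolding k_def k'_def using B B2 assocL[OF gi1] by simp
    ultimately show ?thesis by simp
  qed
  have kg: "k \<cdot> g = p2"
  proof -
    have "p2 \<cdot> (i1 \<cdot> r \<boxplus> s \<cdot> g) = p2" using B B2 Be B2e by simp
    moreover have "p2 \<cdot> (i1 \<cdot> r \<boxplus> s \<cdot> g) = k \<cdot> g"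
      unfolding k_def using B B2 assocL[OF Be(3)] by simp
    ultimately show ?thesis by simp
  qed
  have km: "k \<in> Mor C" "dom C k = Z" "cod C k = Y" "k' \<in> Mor C" "dom C k' = Y" "cod C k' = Z"
    unfolding k_def k'_def using B B2 by auto
  have isok: "Defs.is_iso C k" using isoI[of k k'] km kk' k'k by simp
  show ?thesis
  proof (rule TR1iso[OF t'])
    show "is_candidate C (X, S, Y, i1, p2, z Y (sh X))"
      unfolding is_candidate_def using B by (auto simp: hom_iff)
    show "idt X \<in> Defs.hom C X X" "idt S \<in> Defs.hom C S S" "k \<in> Defs.hom C Z Y" using B km by (auto simp: hom_iff)
    show "Defs.is_iso C (idt X)" "Defs.is_iso C (idt S)" "Defs.is_iso C k" using iso_idt B isok by auto
    show "idt S \<cdot> i1 = i1 \<cdot> idt X" using B by simp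
    show "k \<cdot> g = p2 \<cdot> idt S" using kg B by simp
    show "sm (idt X) \<cdot> z Z (sh X) = z Y (sh X) \<cdot> k" using B km c by simp
  qed
qed

end


context tc
begin

lemma isomI:
  assumes "f \<in> Mor C" "g \<in> Mor C" "dom C f = X" "cod C f = Y" "dom C g = Y" "cod C g = X"
    "g \<cdot> f = idt X" "f \<cdot> g = idt Y"
  shows "Defs.isomorphic C X Y"
proof -
  have "g \<in> Defs.hom C (cod C f) (dom C f)" using assms by (simp add: hom_iff)
  then have "Defs.is_iso C f" unfolding Defs.is_iso_def using assms by blast
  moreover have "f \<in> Defs.hom C X Y" using assms by (simp add: hom_iff)
  ultimately show ?thesis unfolding Defs.isomorphic_def by blast
qed

lemma isomE:
  assumes "Defs.isomorphic C X Y"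
  shows "\<exists>f g. f \<in> Mor C \<and> g \<in> Mor C \<and> dom C f = X \<and> cod C f = Y \<and> dom C g = Y \<and> cod C g = X \<and>
    g \<cdot> f = idt X \<and> f \<cdot> g = idt Y"
proof -
  obtain f where f: "f \<in> Defs.hom C X Y" "Defs.is_iso C f" using assms unfolding Defs.isomorphic_def by blast
  then obtain g where g: "g \<in> Defs.hom C (cod C f) (dom C f)" "g \<cdot> f = idt (dom C f)" "f \<cdot> g = idt (cod C f)"
    unfolding Defs.is_iso_def by blast
  show ?thesis by (intro exI[of _ f] exI[of _ g]) (use f g in \<open>auto simp: hom_iff\<close>)
qed

lemma isom_refl: "X \<in> Ob C \<Longrightarrow> Defs.isomorphic C X X"
  by (rule isomI[of "idt X" "idt X"]) auto

lemma isom_sym: "Defs.isomorphic C X Y \<Longrightarrow> Defs.isomorphic C Y X"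
  using isomE[of X Y] isomI by metis

lemma isom_trans:
  assumes "Defs.isomorphic C X Y" "Defs.isomorphic C Y Z"
  shows "Defs.isomorphic C X Z"
proof -
  obtain f g where fg: "f \<in> Mor C" "g \<in> Mor C" "dom C f = X" "cod C f = Y" "dom C g = Y" "cod C g = X"
    "g \<cdot> f = idt X" "f \<cdot> g = idt Y" using isomE[OF assms(1)] by blast
  obtain f' g' where fg': "f' \<in> Mor C" "g' \<in> Mor C" "dom C f' = Y" "cod C f' = Z" "dom C g' = Z" "cod C g' = Y"
    "g' \<cdot> f' = idt Y" "f' \<cdot> g' = idt Z" using isomE[OF assms(2)] by blast
  show ?thesis
  proof (rule isomI[of "f' \<cdot> f" "g \<cdot> g'"])
    show "(g \<cdot> g') \<cdot> (f' \<cdot> f) = idt X" using fg fg' assocL[OF fg'(7), of f] by simp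
    show "(f' \<cdot> f) \<cdot> (g \<cdot> g') = idt Z" using fg fg' assocL[OF fg(8), of g'] by simp
  qed (use fg fg' in auto)
qed

lemma shift_bpd:
  assumes b: "bpd S X Y i1 i2 p1 p2"
  shows "bpd (sh S) (sh X) (sh Y) (sm i1) (sm i2) (sm p1) (sm p2)"
proof -
  note B = bpd_typ[OF b] and Be = bpd_eq[OF b]
  have e1: "sm p1 \<cdot> sm i1 = idt (sh X)" using sm_comp[of i1 p1] B Be by simp
  have e2: "sm p2 \<cdot> sm i2 = idt (sh Y)" using sm_comp[of i2 p2] B Be by simp
  have e3: "sm p2 \<cdot> sm i1 = z (sh X) (sh Y)" using sm_comp[of i1 p2] B Be by simp
  have e4: "sm p1 \<cdot> sm i2 = z (sh Y) (sh X)" using sm_comp[of i2 p1] B Be by simp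
  have "sm (i1 \<cdot> p1 \<boxplus> i2 \<cdot> p2) = sm (idt S)" using Be by simp
  then have e5: "sm i1 \<cdot> sm p1 \<boxplus> sm i2 \<cdot> sm p2 = idt (sh S)" using B by simp
  show ?thesis unfolding bpd_def using B e1 e2 e3 e4 e5 by simp
qed

lemma bp_unique:
  assumes b: "bpd S X Y i1 i2 p1 p2" and b': "bpd T X Y j1 j2 q1 q2"
  shows "Defs.isomorphic C S T"
proof -
  note B = bpd_typ[OF b] and Be = bpd_eq[OF b] and B' = bpd_typ[OF b'] and Be' = bpd_eq[OF b']
  show ?thesis
  proof (rule isomI[of "j1 \<cdot> p1 \<boxplus> j2 \<cdot> p2" "i1 \<cdot> q1 \<boxplus> i2 \<cdot> q2"])
    show "(i1 \<cdot> q1 \<boxplus> i2 \<cdot> q2) \<cdot> (j1 \<cdot> p1 \<boxplus> j2 \<cdot> p2) = idt S"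
      using B B' Be assocL[OF Be'(1)] assocL[OF Be'(2)] assocL[OF Be'(3)] assocL[OF Be'(4)] by simp
    show "(j1 \<cdot> p1 \<boxplus> j2 \<cdot> p2) \<cdot> (i1 \<cdot> q1 \<boxplus> i2 \<cdot> q2) = idt T"
      using B B' Be' assocL[OF Be(1)] assocL[OF Be(2)] assocL[OF Be(3)] assocL[OF Be(4)] by simp
  qed (use B B' in auto)
qed

lemma bp_unique':
  assumes "is_biproduct C S X Y" "is_biproduct C T X Y"
  shows "Defs.isomorphic C S T"
  using assms bp_unique unfolding bp_iff by blast

lemma bp_swap: "bpd S X Y i1 i2 p1 p2 \<Longrightarrow> bpd S Y X i2 i1 p2 p1"
  unfolding bpd_def using add_comm by (auto simp: add_comm)

lemma bp_swap': "is_biproduct C S X Y \<Longrightarrow> is_biproduct C S Y X"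
  unfolding bp_iff using bp_swap by blast

lemma bp_ex: "X \<in> Ob C \<Longrightarrow> Y \<in> Ob C \<Longrightarrow> \<exists>S. is_biproduct C S X Y"
  using addi unfolding is_additive_def by blast

lemma bp_ob: "is_biproduct C S X Y \<Longrightarrow> S \<in> Ob C \<and> X \<in> Ob C \<and> Y \<in> Ob C"
  unfolding is_biproduct_def by blast

lemma bp_zero:
  assumes b: "bpd S X Z0 i1 i2 p1 p2" and Z0: "is_zero_obj C Z0"
  shows "Defs.isomorphic C S X"
proof -
  note B = bpd_typ[OF b] and Be = bpd_eq[OF b]
  have i2: "i2 = z Z0 S" using zero_from[OF Z0, of i2] B by simp
  show ?thesis
  proof (rule isomI[of p1 i1])
    show "i1 \<cdot> p1 = idt S" using Be(5) i2 B by simp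
  qed (use B Be in auto)
qed

lemma bp_assoc:
  assumes b1: "bpd S X Y i1 i2 p1 p2" and b2: "bpd P S W j1 j2 q1 q2"
    and b3: "bpd R Y W k1 k2 r1 r2"
  shows "bpd P X R (j1 \<cdot> i1) (j1 \<cdot> (i2 \<cdot> r1) \<boxplus> j2 \<cdot> r2) (p1 \<cdot> q1) (k1 \<cdot> (p2 \<cdot> q1) \<boxplus> k2 \<cdot> q2)"
proof -
  note B1 = bpd_typ[OF b1] and E1 = bpd_eq[OF b1]
  note B2 = bpd_typ[OF b2] and E2 = bpd_eq[OF b2]
  note B3 = bpd_typ[OF b3] and E3 = bpd_eq[OF b3]
  note T = B1 B2 B3
  note A = assocL[OF E1(1)] assocL[OF E1(2)] assocL[OF E1(3)] assocL[OF E1(4)]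
    assocL[OF E2(1)] assocL[OF E2(2)] assocL[OF E2(3)] assocL[OF E2(4)]
    assocL[OF E3(1)] assocL[OF E3(2)] assocL[OF E3(3)] assocL[OF E3(4)]
  have e1: "(p1 \<cdot> q1) \<cdot> (j1 \<cdot> i1) = idt X" using T A E1 by simp
  have e2: "(k1 \<cdot> (p2 \<cdot> q1) \<boxplus> k2 \<cdot> q2) \<cdot> (j1 \<cdot> (i2 \<cdot> r1) \<boxplus> j2 \<cdot> r2) = idt R"
    using T A E1 E2 E3 by simp
  have e3: "(k1 \<cdot> (p2 \<cdot> q1) \<boxplus> k2 \<cdot> q2) \<cdot> (j1 \<cdot> i1) = z X R" using T A E1 E2 E3 by simp
  have e4: "(p1 \<cdot> q1) \<cdot> (j1 \<cdot> (i2 \<cdot> r1) \<boxplus> j2 \<cdot> r2) = z R X" using T A E1 E2 E3 by simp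
  have e5: "j1 \<cdot> i1 \<cdot> (p1 \<cdot> q1) \<boxplus> (j1 \<cdot> (i2 \<cdot> r1) \<boxplus> j2 \<cdot> r2) \<cdot> (k1 \<cdot> (p2 \<cdot> q1) \<boxplus> k2 \<cdot> q2) = idt P"
  proof -
    have "j1 \<cdot> ((i1 \<cdot> p1 \<boxplus> i2 \<cdot> p2) \<cdot> q1) \<boxplus> j2 \<cdot> q2 = idt P" using T E1 E2 by simp
    moreover have "j1 \<cdot> ((i1 \<cdot> p1 \<boxplus> i2 \<cdot> p2) \<cdot> q1) \<boxplus> j2 \<cdot> q2 =
      j1 \<cdot> i1 \<cdot> (p1 \<cdot> q1) \<boxplus> (j1 \<cdot> (i2 \<cdot> r1) \<boxplus> j2 \<cdot> r2) \<cdot> (k1 \<cdot> (p2 \<cdot> q1) \<boxplus> k2 \<cdot> q2)"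
    proof -
      have "(j1 \<cdot> (i2 \<cdot> r1) \<boxplus> j2 \<cdot> r2) \<cdot> (k1 \<cdot> (p2 \<cdot> q1) \<boxplus> k2 \<cdot> q2) = j1 \<cdot> (i2 \<cdot> (p2 \<cdot> q1)) \<boxplus> j2 \<cdot> q2"
        using T A by simp
      then show ?thesis using T by (simp add: add_assoc)
    qed
    ultimately show ?thesis by simp
  qed
  show ?thesis unfolding bpd_def using T e1 e2 e3 e4 e5 by simp
qed

lemma Form1:
  assumes t: "(X, Y, Z, f, g, h) \<in> Tri C" and b: "bpd Y' Y A i1 i2 p1 p2"
  shows "\<exists>Z'' m n. (X, Y', Z'', i1 \<cdot> f, m, n) \<in> Tri C \<and> is_biproduct C Z'' Z A"
proof -
  note c = tri_cand[OF t] and B = bpd_typ[OF b]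
  have l1: "(Y, Y', A, i1, p2, z A (sh Y)) \<in> Tri C" using L1[OF b] .
  obtain Z'' m n where t3: "(X, Y', Z'', i1 \<cdot> f, m, n) \<in> Tri C"
    using TR1ex[of "i1 \<cdot> f"] c B by auto
  have hf: "f \<in> Defs.hom C X Y" and hi: "i1 \<in> Defs.hom C Y Y'" using c B by (auto simp: hom_iff)
  obtain u v where uv: "(Z, Z'', A, u, v, sm g \<cdot> z A (sh Y)) \<in> Tri C"
    using TR4[OF hf hi t l1 t3] by blast
  then have "(Z, Z'', A, u, v, z A (sh Z)) \<in> Tri C" using c B by simp
  then obtain s r where "bpd Z'' Z A u s r v" using L2 by blast
  then have "is_biproduct C Z'' Z A" unfolding bp_iff by blast
  then show ?thesis using t3 by blast
qed

end

locale tcd = tc +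
  fixes D
  assumes dense: "is_dense_subcat C D"
begin

lemma tsub: "is_triangulated_subcat C D" using dense unfolding is_dense_subcat_def by blast

lemma D_sub: "X \<in> D \<Longrightarrow> X \<in> Ob C" using tsub unfolding is_triangulated_subcat_def by blast
lemma D_sh: "X \<in> Ob C \<Longrightarrow> sh X \<in> D \<longleftrightarrow> X \<in> D" using tsub unfolding is_triangulated_subcat_def by blast
lemma D_iso: "X \<in> D \<Longrightarrow> Defs.isomorphic C X Y \<Longrightarrow> Y \<in> D"
  using tsub isomE[of X Y] unfolding is_triangulated_subcat_def by (metis mor_ob)
lemma D_cone: "(X, Y, Z, f, g, h) \<in> Tri C \<Longrightarrow> X \<in> D \<Longrightarrow> Y \<in> D \<Longrightarrow> Z \<in> D"
  using tsub unfolding is_triangulated_subcat_def by blast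
lemma D_dense: "U \<in> Ob C \<Longrightarrow> \<exists>V \<in> Ob C. \<exists>S. is_biproduct C S U V \<and> S \<in> D"
  using dense unfolding is_dense_subcat_def by blast

lemma D_mid:
  assumes t: "(X, Y, Z, f, g, h) \<in> Tri C" and "X \<in> D" "Z \<in> D"
  shows "Y \<in> D"
proof -
  note c = tri_cand[OF t]
  have "sh Y \<in> D" using D_cone[OF rot[OF rot[OF t]]] assms c D_sh by blast
  then show ?thesis using D_sh c by blast
qed

lemma B1: "is_biproduct C S A B \<Longrightarrow> A \<in> D \<Longrightarrow> B \<in> D \<Longrightarrow> S \<in> D"
  unfolding bp_iff using L1 D_mid by blast

lemma B2: "is_biproduct C S A B \<Longrightarrow> A \<in> D \<Longrightarrow> S \<in> D \<Longrightarrow> B \<in> D"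
  unfolding bp_iff using L1 D_cone by blast

lemma E':
  assumes t: "(X, Y, Z, f, g, h) \<in> Tri C" and "Z \<in> D"
    and P: "is_biproduct C P X X'" "P \<in> D" and R: "is_biproduct C R Y X'"
  shows "R \<in> D"
proof -
  note c = tri_cand[OF t]
  have r2: "(Z, sh X, sh Y, h, ng (sm f), ng (sm g)) \<in> Tri C" using rot[OF rot[OF t]] .
  obtain i1 i2 p1 p2 where bP: "bpd P X X' i1 i2 p1 p2" using P unfolding bp_iff by blast
  obtain Z'' m n where Z'': "(Z, sh P, Z'', sm i1 \<cdot> h, m, n) \<in> Tri C" "is_biproduct C Z'' (sh Y) (sh X')"
    using Form1[OF r2 shift_bpd[OF bP]] by blast
  have "sh P \<in> D" using P D_sh bpd_typ[OF bP] by blast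
  then have Z''D: "Z'' \<in> D" using D_cone[OF Z''(1)] assms by blast
  obtain j1 j2 q1 q2 where bR: "bpd R Y X' j1 j2 q1 q2" using R unfolding bp_iff by blast
  have "is_biproduct C (sh R) (sh Y) (sh X')" using shift_bpd[OF bR] unfolding bp_iff by blast
  then have "Defs.isomorphic C Z'' (sh R)" using bp_unique' Z''(2) by blast
  then have "sh R \<in> D" using D_iso Z''D by blast
  then show ?thesis using D_sh bpd_typ[OF bR] by blast
qed

end


context tc
begin

lemma bp_transport:
  assumes b: "bpd T Y W j1 j2 q1 q2" and f: "f \<in> Mor C" "dom C f = X" "cod C f = Y"
    and g: "g \<in> Mor C" "dom C g = Y" "cod C g = X" "g \<cdot> f = idt X" "f \<cdot> g = idt Y"
  shows "bpd T X W (j1 \<cdot> f) j2 (g \<cdot> q1) q2"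
proof -
  note B = bpd_typ[OF b] and E = bpd_eq[OF b]
  have e1: "(g \<cdot> q1) \<cdot> (j1 \<cdot> f) = idt X" using B E f g assocL[OF E(1)] by simp
  have e3: "q2 \<cdot> (j1 \<cdot> f) = z X W" using B E f g assocL[OF E(3)] by simp
  have e4: "(g \<cdot> q1) \<cdot> j2 = z W X" using B E f g by simp
  have e5: "j1 \<cdot> f \<cdot> (g \<cdot> q1) \<boxplus> j2 \<cdot> q2 = idt T" using B E f g assocL[OF g(5)] by simp
  have Xo: "X \<in> Ob C" using mor_ob(1)[OF f(1)] f(2) by simp
  show ?thesis unfolding bpd_def using B E f g e1 e3 e4 e5 Xo by simp
qed

lemma bp_iso_comp:
  assumes "is_biproduct C S X W" "is_biproduct C T Y W" "Defs.isomorphic C X Y"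
  shows "Defs.isomorphic C S T"
proof -
  obtain f g where fg: "f \<in> Mor C" "g \<in> Mor C" "dom C f = X" "cod C f = Y" "dom C g = Y" "cod C g = X"
    "g \<cdot> f = idt X" "f \<cdot> g = idt Y" using isomE[OF assms(3)] by blast
  obtain j1 j2 q1 q2 where b: "bpd T Y W j1 j2 q1 q2" using assms(2) unfolding bp_iff by blast
  have "bpd T X W (j1 \<cdot> f) j2 (g \<cdot> q1) q2" using bp_transport[OF b] fg by blast
  then have "is_biproduct C T X W" unfolding bp_iff by blast
  then show ?thesis using bp_unique' assms(1) by blast
qed

end

context tcd
begin

definition eqv where "eqv X Y \<longleftrightarrow> X \<in> Ob C \<and> Y \<in> Ob C \<and>
  (\<forall>W S T. is_biproduct C S X W \<longrightarrow> is_biproduct C T Y W \<longrightarrow> (S \<in> D \<longleftrightarrow> T \<in> D))"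
definition cls where "cls X = {Y. eqv X Y}"
definition bpo where "bpo X Y = (SOME S. is_biproduct C S X Y)"
definition rep where "rep A = (SOME X. X \<in> Ob C \<and> A = cls X)"
definition Z0 where "Z0 = (SOME Z. is_zero_obj C Z)"
definition GD :: "'a set monoid" where
  "GD = \<lparr>carrier = cls ` Ob C, monoid.mult = (\<lambda>A B. cls (bpo (rep A) (rep B))), one = cls Z0\<rparr>"

lemma Z0: "is_zero_obj C Z0" unfolding Z0_def using zero_ex by (rule someI_ex)
lemma Z0o: "Z0 \<in> Ob C" using zero_ob[OF Z0] .

lemma bpo: "X \<in> Ob C \<Longrightarrow> Y \<in> Ob C \<Longrightarrow> is_biproduct C (bpo X Y) X Y"
  unfolding bpo_def using bp_ex by (rule someI_ex)

lemma bpo_ob: "X \<in> Ob C \<Longrightarrow> Y \<in> Ob C \<Longrightarrow> bpo X Y \<in> Ob C"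
  using bpo bp_ob by blast

lemma D_iso_iff: "Defs.isomorphic C X Y \<Longrightarrow> X \<in> D \<longleftrightarrow> Y \<in> D"
  using D_iso isom_sym by blast

lemma iso_eqv: assumes "Defs.isomorphic C X Y" shows "eqv X Y"
proof -
  have "X \<in> Ob C" "Y \<in> Ob C" using isomE[OF assms] by (metis mor_ob)+
  moreover have "S \<in> D \<longleftrightarrow> T \<in> D" if "is_biproduct C S X W" "is_biproduct C T Y W" for W S T
    using bp_iso_comp[OF that assms] D_iso_iff by blast
  ultimately show ?thesis unfolding eqv_def by blast
qed

lemma eqv_refl: "X \<in> Ob C \<Longrightarrow> eqv X X"
  using iso_eqv isom_refl by blast

lemma eqv_sym: "eqv X Y \<Longrightarrow> eqv Y X"
  unfolding eqv_def by blast

lemma eqv_trans: "eqv X Y \<Longrightarrow> eqv Y Z \<Longrightarrow> eqv X Z"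
proof -
  assume a: "eqv X Y" "eqv Y Z"
  have "S \<in> D \<longleftrightarrow> T \<in> D" if "is_biproduct C S X W" "is_biproduct C T Z W" for W S T
  proof -
    have "W \<in> Ob C" using that bp_ob by blast
    moreover have "Y \<in> Ob C" using a unfolding eqv_def by blast
    ultimately obtain R where R: "is_biproduct C R Y W" using bp_ex by blast
    show ?thesis using a that R unfolding eqv_def by blast
  qed
  then show ?thesis using a unfolding eqv_def by blast
qed

lemma cls_eq: "X \<in> Ob C \<Longrightarrow> Y \<in> Ob C \<Longrightarrow> cls X = cls Y \<longleftrightarrow> eqv X Y"
  unfolding cls_def using eqv_refl eqv_sym eqv_trans by blast

lemma rep_cls: assumes "X \<in> Ob C" shows "rep (cls X) \<in> Ob C" "eqv X (rep (cls X))"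
proof -
  have "\<exists>Y. Y \<in> Ob C \<and> cls X = cls Y" using assms by blast
  then have r: "rep (cls X) \<in> Ob C \<and> cls X = cls (rep (cls X))" unfolding rep_def by (rule someI_ex)
  then show "rep (cls X) \<in> Ob C" by blast
  show "eqv X (rep (cls X))" using r cls_eq assms by blast
qed

lemma cong1:
  assumes e: "eqv X X'" and S: "is_biproduct C S X Y" and S': "is_biproduct C S' X' Y"
  shows "eqv S S'"
proof -
  have ob: "X \<in> Ob C" "X' \<in> Ob C" "Y \<in> Ob C" "S \<in> Ob C" "S' \<in> Ob C" using e S S' bp_ob unfolding eqv_def by blast+
  have "P \<in> D \<longleftrightarrow> P' \<in> D" if P: "is_biproduct C P S W" and P': "is_biproduct C P' S' W" for W P P'
  proof -
    have W: "W \<in> Ob C" using P bp_ob by blast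
    obtain R where R: "is_biproduct C R Y W" using bp_ex ob W by blast
    have Ro: "R \<in> Ob C" using R bp_ob by blast
    obtain Q where Q: "is_biproduct C Q X R" using bp_ex ob Ro by blast
    obtain Q' where Q': "is_biproduct C Q' X' R" using bp_ex ob Ro by blast
    obtain i1 i2 p1 p2 where b1: "bpd S X Y i1 i2 p1 p2" using S unfolding bp_iff by blast
    obtain i1' i2' p1' p2' where b1': "bpd S' X' Y i1' i2' p1' p2'" using S' unfolding bp_iff by blast
    obtain j1 j2 q1 q2 where b2: "bpd P S W j1 j2 q1 q2" using P unfolding bp_iff by blast
    obtain j1' j2' q1' q2' where b2': "bpd P' S' W j1' j2' q1' q2'" using P' unfolding bp_iff by blast
    obtain k1 k2 r1 r2 where b3: "bpd R Y W k1 k2 r1 r2" using R unfolding bp_iff by blast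
    have "is_biproduct C P X R" using bp_assoc[OF b1 b2 b3] unfolding bp_iff by blast
    then have "Defs.isomorphic C P Q" using bp_unique' Q by blast
    moreover have "is_biproduct C P' X' R" using bp_assoc[OF b1' b2' b3] unfolding bp_iff by blast
    then have "Defs.isomorphic C P' Q'" using bp_unique' Q' by blast
    moreover have "Q \<in> D \<longleftrightarrow> Q' \<in> D" using e Q Q' unfolding eqv_def by blast
    ultimately show ?thesis using D_iso_iff by blast
  qed
  then show ?thesis using ob unfolding eqv_def by blast
qed

lemma cong:
  assumes e: "eqv X X'" "eqv Y Y'" and S: "is_biproduct C S X Y" and S': "is_biproduct C S' X' Y'"
  shows "eqv S S'"
proof -
  have ob: "X' \<in> Ob C" "Y \<in> Ob C" using e unfolding eqv_def by blast+
  obtain S'' where S'': "is_biproduct C S'' X' Y" using bp_ex ob by blast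
  have "eqv S S''" using cong1[OF e(1) S S''] .
  moreover have "eqv S'' S'" using cong1[OF e(2) bp_swap'[OF S''] bp_swap'[OF S']] .
  ultimately show ?thesis using eqv_trans by blast
qed

lemma mult_cls:
  assumes "X \<in> Ob C" "Y \<in> Ob C" "is_biproduct C S X Y"
  shows "cls (bpo (rep (cls X)) (rep (cls Y))) = cls S"
proof -
  have r: "rep (cls X) \<in> Ob C" "rep (cls Y) \<in> Ob C" "eqv X (rep (cls X))" "eqv Y (rep (cls Y))"
    using rep_cls assms by blast+
  have "eqv (bpo (rep (cls X)) (rep (cls Y))) S"
    using cong[OF eqv_sym[OF r(3)] eqv_sym[OF r(4)] bpo[OF r(1,2)] assms(3)] .
  then show ?thesis using cls_eq bpo_ob r assms bp_ob by blast
qed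

lemma GD_mult: "X \<in> Ob C \<Longrightarrow> Y \<in> Ob C \<Longrightarrow> is_biproduct C S X Y \<Longrightarrow> cls X \<otimes>\<^bsub>GD\<^esub> cls Y = cls S"
  unfolding GD_def using mult_cls by simp

lemma GD_carrier: "carrier GD = cls ` Ob C" unfolding GD_def by simp
lemma GD_one: "\<one>\<^bsub>GD\<^esub> = cls Z0" unfolding GD_def by simp

lemma bp_zero': assumes "is_biproduct C S Z0 X" shows "Defs.isomorphic C S X"
  using assms bp_swap' bp_zero Z0 unfolding bp_iff by blast

lemma cls_one_iff:
  assumes X: "X \<in> Ob C"
  shows "cls X = cls Z0 \<longleftrightarrow> X \<in> D"
proof
  assume "cls X = cls Z0"
  then have e: "eqv X Z0" using cls_eq X Z0o by blast
  obtain V S where V: "V \<in> Ob C" "is_biproduct C S X V" "S \<in> D" using D_dense X by blast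
  obtain T where T: "is_biproduct C T Z0 V" using bp_ex Z0o V by blast
  have "T \<in> D" using e V T unfolding eqv_def by blast
  then have "V \<in> D" using D_iso bp_zero'[OF T] by blast
  then show "X \<in> D" using B2[OF bp_swap'[OF V(2)]] V by blast
next
  assume XD: "X \<in> D"
  have "S \<in> D \<longleftrightarrow> T \<in> D" if S: "is_biproduct C S X W" and T: "is_biproduct C T Z0 W" for W S T
  proof
    assume "S \<in> D"
    then have "W \<in> D" using B2[OF S XD] by blast
    then show "T \<in> D" using D_iso isom_sym[OF bp_zero'[OF T]] by blast
  next
    assume "T \<in> D"
    then have "W \<in> D" using D_iso bp_zero'[OF T] by blast
    then show "S \<in> D" using B1[OF S XD] by blast
  qed
  then have "eqv X Z0" unfolding eqv_def using X Z0o by blast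
  then show "cls X = cls Z0" using cls_eq X Z0o by blast
qed

lemma GD_comm_group: "comm_group GD"
proof (rule comm_groupI)
  fix x y assume "x \<in> carrier GD" "y \<in> carrier GD"
  then obtain X Y where XY: "X \<in> Ob C" "Y \<in> Ob C" "x = cls X" "y = cls Y" unfolding GD_carrier by blast
  show "x \<otimes>\<^bsub>GD\<^esub> y \<in> carrier GD"
    using XY GD_mult[OF XY(1,2) bpo[OF XY(1,2)]] bpo_ob[OF XY(1,2)] unfolding GD_carrier by blast
  show "x \<otimes>\<^bsub>GD\<^esub> y = y \<otimes>\<^bsub>GD\<^esub> x"
  proof -
    have "x \<otimes>\<^bsub>GD\<^esub> y = cls (bpo X Y)" using XY GD_mult[OF XY(1,2) bpo[OF XY(1,2)]] by simp
    moreover have "y \<otimes>\<^bsub>GD\<^esub> x = cls (bpo X Y)" using XY GD_mult[OF XY(2,1) bp_swap'[OF bpo[OF XY(1,2)]]] by simp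
    ultimately show ?thesis by simp
  qed
next
  show "\<one>\<^bsub>GD\<^esub> \<in> carrier GD" unfolding GD_one GD_carrier using Z0o by blast
next
  fix x y w assume "x \<in> carrier GD" "y \<in> carrier GD" "w \<in> carrier GD"
  then obtain X Y W where XY: "X \<in> Ob C" "Y \<in> Ob C" "W \<in> Ob C" "x = cls X" "y = cls Y" "w = cls W"
    unfolding GD_carrier by blast
  define S where "S = bpo X Y"
  define P where "P = bpo S W"
  define R where "R = bpo Y W"
  define Q where "Q = bpo X R"
  have So: "S \<in> Ob C" "R \<in> Ob C" using bpo_ob XY S_def R_def by auto
  have l: "x \<otimes>\<^bsub>GD\<^esub> y \<otimes>\<^bsub>GD\<^esub> w = cls P"
    using GD_mult[OF XY(1,2) bpo[OF XY(1,2)]] GD_mult[OF So(1) XY(3) bpo[OF So(1) XY(3)]] XY S_def P_def by simp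
  have r: "x \<otimes>\<^bsub>GD\<^esub> (y \<otimes>\<^bsub>GD\<^esub> w) = cls Q"
    using GD_mult[OF XY(2,3) bpo[OF XY(2,3)]] GD_mult[OF XY(1) So(2) bpo[OF XY(1) So(2)]] XY R_def Q_def by simp
  obtain i1 i2 p1 p2 where b1: "bpd S X Y i1 i2 p1 p2" using bpo[OF XY(1,2)] S_def unfolding bp_iff by blast
  obtain j1 j2 q1 q2 where b2: "bpd P S W j1 j2 q1 q2" using bpo[OF So(1) XY(3)] P_def unfolding bp_iff by blast
  obtain k1 k2 r1 r2 where b3: "bpd R Y W k1 k2 r1 r2" using bpo[OF XY(2,3)] R_def unfolding bp_iff by blast
  have "is_biproduct C P X R" using bp_assoc[OF b1 b2 b3] unfolding bp_iff by blast
  then have "Defs.isomorphic C P Q" using bp_unique' bpo[OF XY(1) So(2)] Q_def by blast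
  then have "cls P = cls Q" using cls_eq iso_eqv bp_ob bpo[OF XY(1) So(2)] Q_def isomE by (metis mor_ob)
  then show "x \<otimes>\<^bsub>GD\<^esub> y \<otimes>\<^bsub>GD\<^esub> w = x \<otimes>\<^bsub>GD\<^esub> (y \<otimes>\<^bsub>GD\<^esub> w)" using l r by simp
next
  fix x assume "x \<in> carrier GD"
  then obtain X where X: "X \<in> Ob C" "x = cls X" unfolding GD_carrier by blast
  have "\<one>\<^bsub>GD\<^esub> \<otimes>\<^bsub>GD\<^esub> x = cls (bpo Z0 X)"
    using GD_mult[OF Z0o X(1) bpo[OF Z0o X(1)]] X GD_one by simp
  also have "\<dots> = cls X" using iso_eqv[OF bp_zero'[OF bpo[OF Z0o X(1)]]] cls_eq bpo_ob Z0o X by blast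
  finally show "\<one>\<^bsub>GD\<^esub> \<otimes>\<^bsub>GD\<^esub> x = x" using X by simp
  obtain V S where V: "V \<in> Ob C" "is_biproduct C S X V" "S \<in> D" using D_dense X by blast
  have "cls V \<otimes>\<^bsub>GD\<^esub> x = cls S" using GD_mult[OF V(1) X(1) bp_swap'[OF V(2)]] X by simp
  also have "\<dots> = \<one>\<^bsub>GD\<^esub>" using cls_one_iff V bp_ob GD_one by blast
  finally show "\<exists>y \<in> carrier GD. y \<otimes>\<^bsub>GD\<^esub> x = \<one>\<^bsub>GD\<^esub>" using V unfolding GD_carrier by blast
qed

end



context tcd
begin

sublocale G: comm_group GD by (rule GD_comm_group)

lemma cls_car: "X \<in> Ob C \<Longrightarrow> cls X \<in> carrier GD"
  unfolding GD_carrier by blast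

definition supp :: "('a \<Rightarrow> int) \<Rightarrow> 'a set" where "supp a = {X. a X \<noteq> 0}"
definition phi where "phi a = finprod GD (\<lambda>X. cls X [^]\<^bsub>GD\<^esub> a X) (supp a)"

lemma phi_F:
  assumes "finite F" "supp a \<subseteq> F" "F \<subseteq> Ob C"
  shows "phi a = finprod GD (\<lambda>X. cls X [^]\<^bsub>GD\<^esub> a X) F"
  unfolding phi_def
proof (rule G.finprod_mono_neutral_cong_left)
  show "(\<lambda>X. cls X [^]\<^bsub>GD\<^esub> a X) \<in> F \<rightarrow> carrier GD" using assms cls_car by auto
  show "\<And>i. i \<in> F - supp a \<Longrightarrow> cls i [^]\<^bsub>GD\<^esub> a i = \<one>\<^bsub>GD\<^esub>" unfolding supp_def by simp
qed (use assms in auto)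

lemma phi_closed: "finite (supp a) \<Longrightarrow> supp a \<subseteq> Ob C \<Longrightarrow> phi a \<in> carrier GD"
  unfolding phi_def by (rule G.finprod_closed) (use cls_car in auto)

lemma supp_add: "supp (\<lambda>A. a A + b A) \<subseteq> supp a \<union> supp b" unfolding supp_def by auto
lemma supp_neg: "supp (\<lambda>A. - a A) = supp a" unfolding supp_def by auto
lemma supp_gen: "supp (gen X) = {X}" unfolding supp_def gen_def by auto
lemma supp_zero: "supp (\<lambda>_. 0) = {}" unfolding supp_def by auto

lemma phi_add:
  assumes a: "finite (supp a)" "supp a \<subseteq> Ob C" and b: "finite (supp b)" "supp b \<subseteq> Ob C"
  shows "phi (\<lambda>A. a A + b A) = phi a \<otimes>\<^bsub>GD\<^esub> phi b"
proof -
  define F where "F = supp a \<union> supp b"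
  have F: "finite F" "F \<subseteq> Ob C" using a b F_def by auto
  have "phi (\<lambda>A. a A + b A) = finprod GD (\<lambda>X. cls X [^]\<^bsub>GD\<^esub> (a X + b X)) F"
    using phi_F[of F] F supp_add[of a b] F_def by auto
  also have "\<dots> = finprod GD (\<lambda>X. cls X [^]\<^bsub>GD\<^esub> a X \<otimes>\<^bsub>GD\<^esub> cls X [^]\<^bsub>GD\<^esub> b X) F"
    by (rule G.finprod_cong') (use F cls_car G.int_pow_mult in auto)
  also have "\<dots> = finprod GD (\<lambda>X. cls X [^]\<^bsub>GD\<^esub> a X) F \<otimes>\<^bsub>GD\<^esub> finprod GD (\<lambda>X. cls X [^]\<^bsub>GD\<^esub> b X) F"
    by (rule G.finprod_multf) (use F cls_car in auto)
  also have "\<dots> = phi a \<otimes>\<^bsub>GD\<^esub> phi b"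
    using phi_F[of F a] phi_F[of F b] F F_def by auto
  finally show ?thesis .
qed

lemma phi_zero: "phi (\<lambda>_. 0) = \<one>\<^bsub>GD\<^esub>"
  unfolding phi_def supp_zero by simp

lemma phi_neg:
  assumes a: "finite (supp a)" "supp a \<subseteq> Ob C"
  shows "phi (\<lambda>A. - a A) = inv\<^bsub>GD\<^esub> (phi a)"
proof -
  have "phi (\<lambda>A. - a A + a A) = phi (\<lambda>A. - a A) \<otimes>\<^bsub>GD\<^esub> phi a"
    using phi_add[of "\<lambda>A. - a A" a] a supp_neg[of a] by simp
  then have "phi (\<lambda>A. - a A) \<otimes>\<^bsub>GD\<^esub> phi a = \<one>\<^bsub>GD\<^esub>" using phi_zero by simp
  then show ?thesis using G.inv_equality phi_closed a supp_neg[of a] by metis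
qed

lemma phi_gen: "X \<in> Ob C \<Longrightarrow> phi (gen X) = cls X"
  using phi_F[of "{X}" "gen X"] supp_gen[of X] cls_car[of X] by (simp add: gen_def)

lemma grp_lemma:
  assumes c: "a \<in> carrier GD" "b \<in> carrier GD" "c \<in> carrier GD" "a' \<in> carrier GD" "c' \<in> carrier GD"
    and h: "a \<otimes>\<^bsub>GD\<^esub> a' = \<one>\<^bsub>GD\<^esub>" "c \<otimes>\<^bsub>GD\<^esub> c' = \<one>\<^bsub>GD\<^esub>" "b \<otimes>\<^bsub>GD\<^esub> c' \<otimes>\<^bsub>GD\<^esub> a' = \<one>\<^bsub>GD\<^esub>"
  shows "b = a \<otimes>\<^bsub>GD\<^esub> c"
proof -
  have "b = b \<otimes>\<^bsub>GD\<^esub> (c \<otimes>\<^bsub>GD\<^esub> c') \<otimes>\<^bsub>GD\<^esub> (a \<otimes>\<^bsub>GD\<^esub> a')" using h c by simp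
  also have "\<dots> = (b \<otimes>\<^bsub>GD\<^esub> c' \<otimes>\<^bsub>GD\<^esub> a') \<otimes>\<^bsub>GD\<^esub> (a \<otimes>\<^bsub>GD\<^esub> c)" using c by (simp add: G.m_ac)
  also have "\<dots> = a \<otimes>\<^bsub>GD\<^esub> c" using h c by simp
  finally show ?thesis .
qed

lemma tri_cls:
  assumes t: "(U, V, W, f, g, h) \<in> Tri C"
  shows "cls V = cls U \<otimes>\<^bsub>GD\<^esub> cls W"
proof -
  note c = tri_cand[OF t]
  obtain U' SU where U': "U' \<in> Ob C" "is_biproduct C SU U U'" "SU \<in> D" using D_dense c by blast
  obtain W' SW where W': "W' \<in> Ob C" "is_biproduct C SW W W'" "SW \<in> D" using D_dense c by blast
  define Y' where "Y' = bpo V W'"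
  have Y': "is_biproduct C Y' V W'" "Y' \<in> Ob C" using bpo bpo_ob c W' Y'_def by auto
  obtain i1 i2 p1 p2 where bY: "bpd Y' V W' i1 i2 p1 p2" using Y' unfolding bp_iff by blast
  obtain Z'' m n where Z'': "(U, Y', Z'', i1 \<cdot> f, m, n) \<in> Tri C" "is_biproduct C Z'' W W'"
    using Form1[OF t bY] by blast
  have "Defs.isomorphic C SW Z''" using bp_unique' W'(2) Z''(2) by blast
  then have Z''D: "Z'' \<in> D" using D_iso W'(3) by blast
  define R where "R = bpo Y' U'"
  have R: "is_biproduct C R Y' U'" using bpo Y' U' R_def by auto
  have RD: "R \<in> D" using E'[OF Z''(1) Z''D U'(2) U'(3) R] .
  have "cls R = cls Y' \<otimes>\<^bsub>GD\<^esub> cls U'" using GD_mult[OF Y'(2) U'(1) R] by simp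
  also have "cls Y' = cls V \<otimes>\<^bsub>GD\<^esub> cls W'" using GD_mult[OF c(2) W'(1) Y'(1)] by simp
  finally have h3: "cls V \<otimes>\<^bsub>GD\<^esub> cls W' \<otimes>\<^bsub>GD\<^esub> cls U' = \<one>\<^bsub>GD\<^esub>"
    using cls_one_iff[of R] RD D_sub[OF RD] GD_one by simp
  have h1: "cls U \<otimes>\<^bsub>GD\<^esub> cls U' = \<one>\<^bsub>GD\<^esub>"
    using GD_mult[OF c(1) U'(1) U'(2)] cls_one_iff[of SU] U'(3) D_sub[OF U'(3)] GD_one by simp
  have h2: "cls W \<otimes>\<^bsub>GD\<^esub> cls W' = \<one>\<^bsub>GD\<^esub>"
    using GD_mult[OF c(3) W'(1) W'(2)] cls_one_iff[of SW] W'(3) D_sub[OF W'(3)] GD_one by simp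
  show ?thesis using grp_lemma[OF cls_car cls_car cls_car cls_car cls_car h1 h2 h3] c U'(1) W'(1) by simp
qed

lemma grel_phi:
  assumes "a \<in> grel C"
  shows "finite (supp a) \<and> supp a \<subseteq> Ob C \<and> phi a = \<one>\<^bsub>GD\<^esub>"
  using assms
proof (induction rule: grel.induct)
  case grel_zero
  then show ?case using phi_zero supp_zero by simp
next
  case (grel_iso X Y)
  have s: "supp (\<lambda>A. gen X A - gen Y A) \<subseteq> {X, Y}" unfolding supp_def gen_def by auto
  have "phi (\<lambda>A. gen X A + - gen Y A) = phi (gen X) \<otimes>\<^bsub>GD\<^esub> phi (\<lambda>A. - gen Y A)"
    using phi_add[of "gen X" "\<lambda>A. - gen Y A"] supp_gen supp_neg[of "gen Y"] grel_iso by simp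
  also have "\<dots> = cls X \<otimes>\<^bsub>GD\<^esub> inv\<^bsub>GD\<^esub> (cls Y)"
    using phi_neg[of "gen Y"] supp_gen phi_gen grel_iso by simp
  also have "cls Y = cls X" using iso_eqv[OF grel_iso(3)] cls_eq grel_iso by blast
  finally have "phi (\<lambda>A. gen X A - gen Y A) = \<one>\<^bsub>GD\<^esub>" using cls_car grel_iso by simp
  then show ?case using s grel_iso finite_subset by auto
next
  case (grel_tri U V W f g h)
  note c = tri_cand[OF grel_tri]
  have s: "supp (\<lambda>A. gen V A - gen U A - gen W A) \<subseteq> {U, V, W}" unfolding supp_def gen_def by auto
  have e: "(\<lambda>A. gen V A - gen U A - gen W A) = (\<lambda>A. gen V A + - (gen U A + gen W A))" by auto
  have fs: "finite (supp (\<lambda>A. gen U A + gen W A))" "supp (\<lambda>A. gen U A + gen W A) \<subseteq> Ob C"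
  proof -
    have s2: "supp (\<lambda>A. gen U A + gen W A) \<subseteq> {U, W}" using supp_add[of "gen U" "gen W"] supp_gen by auto
    show "finite (supp (\<lambda>A. gen U A + gen W A))" using finite_subset[OF s2] by simp
    show "supp (\<lambda>A. gen U A + gen W A) \<subseteq> Ob C" using s2 c(1,3) by auto
  qed
  have "phi (\<lambda>A. gen V A + - (gen U A + gen W A)) =
      phi (gen V) \<otimes>\<^bsub>GD\<^esub> phi (\<lambda>A. - (gen U A + gen W A))"
    using phi_add[of "gen V" "\<lambda>A. - (gen U A + gen W A)"] supp_gen
      supp_neg[of "\<lambda>A. gen U A + gen W A"] fs c by simp
  also have "phi (\<lambda>A. - (gen U A + gen W A)) = inv\<^bsub>GD\<^esub> (phi (\<lambda>A. gen U A + gen W A))"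
    using phi_neg[OF fs] by simp
  also have "phi (\<lambda>A. gen U A + gen W A) = cls U \<otimes>\<^bsub>GD\<^esub> cls W"
    using phi_add[of "gen U" "gen W"] supp_gen phi_gen c by simp
  also have "\<dots> = cls V" using tri_cls[OF grel_tri] by simp
  finally have "phi (\<lambda>A. gen V A - gen U A - gen W A) = \<one>\<^bsub>GD\<^esub>" using e phi_gen c cls_car by simp
  then show ?case using s c finite_subset by auto
next
  case (grel_add a b)
  then show ?case using phi_add[of a b] supp_add[of a b] finite_subset phi_closed by auto
next
  case (grel_neg a)
  then show ?case using phi_neg[of a] supp_neg[of a] by simp
qed

lemma pow_ex:
  assumes U: "U \<in> Ob C"
  shows "\<exists>S. S \<in> Ob C \<and> is_power C (Suc m) S U \<and> cls S = cls U [^]\<^bsub>GD\<^esub> (Suc m)"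
proof (induction m)
  case 0
  then show ?case using U isom_refl cls_car by (intro exI[of _ U]) simp
next
  case (Suc m)
  then obtain T where T: "T \<in> Ob C" "is_power C (Suc m) T U" "cls T = cls U [^]\<^bsub>GD\<^esub> (Suc m)" by blast
  define S where "S = bpo T U"
  have S: "is_biproduct C S T U" "S \<in> Ob C" using bpo bpo_ob T U S_def by auto
  have "is_power C (Suc (Suc m)) S U" using T S by auto
  moreover have "cls S = cls U [^]\<^bsub>GD\<^esub> (Suc (Suc m))"
    using GD_mult[OF T(1) U S(1)] T(3) by simp
  ultimately show ?case using S by blast
qed

lemma phi_mult_gen:
  assumes U: "U \<in> Ob C"
  shows "phi (\<lambda>A. int n * gen U A) = cls U [^]\<^bsub>GD\<^esub> n"
proof -
  have "supp (\<lambda>A. int n * gen U A) \<subseteq> {U}" unfolding supp_def gen_def by auto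
  then have "phi (\<lambda>A. int n * gen U A) = finprod GD (\<lambda>X. cls X [^]\<^bsub>GD\<^esub> (int n * gen U X)) {U}"
    using phi_F U by auto
  also have "\<dots> = cls U [^]\<^bsub>GD\<^esub> (int n)" using cls_car U by (simp add: gen_def)
  finally show ?thesis by (simp add: int_pow_int)
qed

end

theorem lemma3p9:
  fixes C :: "('o, 'm) tricat" and D :: "'o set" and U :: 'o
  assumes "is_triangulated C"
    and "is_dense_subcat C D"
    and "is_radical C D"
    and "U \<in> Ob C"
    and "class_torsion C U"
  shows "U \<in> D"
proof -
  interpret tcd C D unfolding tcd_def tcd_axioms_def tc_def using assms(1,2) by blast
  obtain n where n: "n \<ge> 1" "(\<lambda>A. int n * gen U A) \<in> grel C"
    using assms(5) unfolding class_torsion_def by blast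
  obtain m where m: "n = Suc m" using n(1) by (cases n) auto
  have "cls U [^]\<^bsub>GD\<^esub> n = \<one>\<^bsub>GD\<^esub>" using grel_phi[OF n(2)] phi_mult_gen[OF assms(4)] by simp
  moreover obtain S where S: "S \<in> Ob C" "is_power C n S U" "cls S = cls U [^]\<^bsub>GD\<^esub> n"
    using pow_ex[OF assms(4), of m] m by blast
  ultimately have "S \<in> D" using cls_one_iff GD_one by simp
  then show ?thesis using assms(3,4) S(2) n(1) unfolding is_radical_def by blast
qed


end
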